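(* Let $d,D$ be positive integers with $D\geq4d$, and let $\phi$, $\phi_{c}$, $F_{c}$, $K$, $K^{+}$, $a_{0}$ be as in the context (in particular satisfying all the standing assumptions listed there). Then, for Lebesgue-almost every $c$ in the open ball $\{c:\|c\|<a_{0}\}$, the delay map $F_{c}$ is immersive at every point of $K$, i.e. $dF_{c}(x)v\neq0$ for every $x\in K$ and every nonzero $v\in\mathbb{R}^{d}$; equivalently this holds with probability one relative to the ball $\|c\|<a_{0}$.
   Context: Notation: $\pi_{i}$ denotes projection of $\mathbb{R}^{d}$ onto the $i$-th coordinate and $\mathbf{e}_{1}=(1,0,\ldots,0)\in\mathbb{R}^{d}$. For a multi-index $\alpha\in\mathbb{Z}_{\geq0}^{d}$, $p_{\alpha}(x)=\prod_{i=1}^{d}(\pi_{i}x)^{\alpha_{i}}$ and $|\alpha|=\sum_i\alpha_i$. Let $\mathcal{I}_{2D-1}$ be the set of multi-indices with $|\alpha|\leq2D-1$ and $D_{\alpha}$ its cardinality; parameters are $c=(c_{\alpha})_{\alpha\in\mathcal{I}_{2D-1}}\in\mathbb{R}^{D_{\alpha}}$ with the Euclidean norm. Let $\phi:\mathbb{R}^{d}\to\mathbb{R}^{d}$ be a diffeomorphism and $\phi_{c}(x)=\phi(x)+\mathbf{e}_{1}\sum_{\alpha}c_{\alpha}p_{\alpha}(x)$. The delay map is $F_{c}(x)=(\pi_{1}x,\pi_{1}\phi_{c}(x),\ldots,\pi_{1}\phi_{c}^{D-1}(x))\in\mathbb{R}^{D}$. Standing assumptions: $K$ is a compact ball in $\mathbb{R}^{d}$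 centered at the origin; $K^{+}$ is a larger compact ball containing $K$ such that $\phi^{j}(x)\in K^{+}$ for $x\in K$, $0\leq j\leq D-1$; $a_{0}>0$ is so small that $\phi_{c}^{j}(x)\in K^{+}$ for all $x\in K$, $0\leq j\leq D-1$, $\|c\|\leq a_{0}$. Moreover, for every $\|c\|\leq a_{0}$: (1) $\phi_{c}$ is a $C^{3}$ diffeomorphism of $\mathbb{R}^{d}$; (2) $\phi_{c}$ has exactly $m$ fixed points $\xi_{1}(c),\ldots,\xi_{m}(c)$ (labelled consistently in $c$); (3) $\phi_{c}$ has no other periodic points of period less than $2D$; (4) all fixed points are hyperbolic and $\pi_{1}\xi_{i}(c)\neq\pi_{1}\xi_{j}(c)$ for $i\neq j$; (5) $F_{c}$ is immersive at each fixed point. "Probability of $A$ relative to $B$" means $\mu(A\cap B)/\mu(B)$, $\mu$ Lebesgue measure. *)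

theory Defs
  imports "HOL-Analysis.Analysis" "HOL-Probability.Probability"
begin

definition monomial :: "('d::finite \<Rightarrow> nat) \<Rightarrow> real^'d \<Rightarrow> real" where
  "monomial \<alpha> x = (\<Prod>i\<in>UNIV. (x $ i) ^ (\<alpha> i))"

definition mdeg :: "('d::finite \<Rightarrow> nat) \<Rightarrow> nat" where
  "mdeg \<alpha> = (\<Sum>i\<in>UNIV. \<alpha> i)"

definition mindex :: "nat \<Rightarrow> ('d::finite \<Rightarrow> nat) set" where
  "mindex D = {\<alpha>. mdeg \<alpha> \<le> 2 * D - 1}"

definition pnorm :: "nat \<Rightarrow> (('d::finite \<Rightarrow> nat) \<Rightarrow> real) \<Rightarrow> real" where
  "pnorm D c = sqrt (\<Sum>\<alpha>\<in>mindex D. (c \<alpha>)\<^sup>2)"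

definition param_measure :: "nat \<Rightarrow> (('d::finite \<Rightarrow> nat) \<Rightarrow> real) measure" where
  "param_measure D = PiM (mindex D) (\<lambda>_. lborel)"

text \<open>phi_c(x) = phi(x) + e_1 * sum_alpha c_alpha p_alpha(x); the first coordinate is i1.\<close>
definition perturb ::
  "'d \<Rightarrow> nat \<Rightarrow> (real^'d \<Rightarrow> real^'d) \<Rightarrow> (('d::finite \<Rightarrow> nat) \<Rightarrow> real) \<Rightarrow> real^'d \<Rightarrow> real^'d" where
  "perturb i1 D \<phi> c x = \<phi> x + (\<Sum>\<alpha>\<in>mindex D. c \<alpha> * monomial \<alpha> x) *\<^sub>R axis i1 1"

fun Ck :: "nat \<Rightarrow> (real^'d::finite \<Rightarrow> 'b::real_normed_vector) \<Rightarrow> bool" where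
  "Ck 0 g = continuous_on UNIV g"
| "Ck (Suc k) g = ((\<forall>x. g differentiable (at x)) \<and>
      (\<forall>i. Ck k (\<lambda>x. frechet_derivative g (at x) (axis i 1))))"

definition diffeomorphism :: "(real^'d::finite \<Rightarrow> real^'d) \<Rightarrow> bool" where
  "diffeomorphism f \<longleftrightarrow> bij f \<and> (\<forall>x. f differentiable (at x)) \<and> (\<forall>y. inv f differentiable (at y))"

definition Ck_diffeomorphism :: "nat \<Rightarrow> (real^'d::finite \<Rightarrow> real^'d) \<Rightarrow> bool" where
  "Ck_diffeomorphism k f \<longleftrightarrow> bij f \<and> Ck k f \<and> Ck k (inv f)"

text \<open>Hyperbolic fixed point: Jacobian has no (complex) eigenvalue of modulus one.\<close>
definition hyperbolic_fixed_point :: "(real^'d::finite \<Rightarrow> real^'d) \<Rightarrow> real^'d \<Rightarrow> bool" where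
  "hyperbolic_fixed_point f p \<longleftrightarrow> f p = p \<and> f differentiable (at p) \<and>
     (let J = matrix (frechet_derivative f (at p)) in
      \<forall>z::complex. cmod z = 1 \<longrightarrow>
        det ((\<chi> i j. complex_of_real (J $ i $ j)) - mat z :: complex^'d^'d) \<noteq> 0)"

text \<open>Delay map F(x) = (pi_1 x, pi_1 f(x), ..., pi_1 f^{D-1}(x)) in R^D, given by its components;
  F is immersive at x iff all components are differentiable at x and dF(x) v \<noteq> 0 for v \<noteq> 0,
  where dF(x) v = (d(pi_1 o f^j)(x) v)_{j<D}.\<close>
definition delay_immersive_at :: "'d \<Rightarrow> nat \<Rightarrow> (real^'d::finite \<Rightarrow> real^'d) \<Rightarrow> real^'d \<Rightarrow> bool" where
  "delay_immersive_at i1 D f x \<longleftrightarrow>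
     (\<forall>j<D. (\<lambda>y. (f ^^ j) y $ i1) differentiable (at x)) \<and>
     (\<forall>v. v \<noteq> 0 \<longrightarrow> (\<exists>j<D. frechet_derivative (\<lambda>y. (f ^^ j) y $ i1) (at x) v \<noteq> 0))"

end

theory Submission
  imports Defs "HOL-Library.Cardinality"
begin

definition pd :: "(real^'d::finite \<Rightarrow> 'b::real_normed_vector) \<Rightarrow> 'd \<Rightarrow> real^'d \<Rightarrow> 'b" where
  "pd g i z = frechet_derivative g (at z) (axis i 1)"

declare Ck.simps(2)[simp del]

lemma Ck_Suc_pd: "Ck (Suc k) g \<longleftrightarrow> (\<forall>x. g differentiable (at x)) \<and> (\<forall>i. Ck k (pd g i))"
  by (simp add: pd_def[abs_def] Ck.simps(2))

lemma Ck_imp_cont: "Ck k g \<Longrightarrow> continuous_on UNIV g"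
  by (cases k) (auto intro!: differentiable_imp_continuous_on simp: differentiable_on_def differentiable_at_withinI Ck_Suc_pd)

lemma Ck_Suc_imp: "Ck (Suc k) g \<Longrightarrow> Ck k g"
proof (induction k arbitrary: g)
  case 0
  then show ?case by (auto intro!: differentiable_imp_continuous_on simp: differentiable_on_def differentiable_at_withinI Ck_Suc_pd)
next
  case (Suc k)
  then show ?case by (simp add: Ck_Suc_pd)
qed

lemma Ck_le: "Ck k g \<Longrightarrow> j \<le> k \<Longrightarrow> Ck j g"
proof (induction k)
  case 0 then show ?case by simp
next
  case (Suc k) then show ?case using Ck_Suc_imp le_Suc_eq by blast
qed

lemma linear_axis_expand:
  fixes f :: "real^'d::finite \<Rightarrow> 'b::real_vector"
  assumes "linear f"
  shows "f w = (\<Sum>i\<in>UNIV. (w $ i) *\<^sub>R f (axis i 1))"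
proof -
  have "f w = f (\<Sum>i\<in>UNIV. (w $ i) *\<^sub>R axis i 1)"
    using basis_expansion[of w] by (simp add: scalar_mult_eq_scaleR)
  also have "\<dots> = (\<Sum>i\<in>UNIV. (w $ i) *\<^sub>R f (axis i 1))"
    using assms by (simp add: linear_sum linear_scale)
  finally show ?thesis .
qed

lemma frechet_expand:
  fixes g :: "real^'d::finite \<Rightarrow> 'b::real_normed_vector"
  assumes "g differentiable (at z)"
  shows "frechet_derivative g (at z) w = (\<Sum>i\<in>UNIV. (w $ i) *\<^sub>R pd g i z)"
proof -
  have "linear (frechet_derivative g (at z))"
    using assms frechet_derivative_works has_derivative_linear by blast
  then show ?thesis unfolding pd_def by (rule linear_axis_expand)
qed

lemma pd_eq: "(g has_derivative g') (at z) \<Longrightarrow> pd g i z = g' (axis i 1)"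
  unfolding pd_def using frechet_derivative_at by metis

lemma Ck_const: "Ck k (\<lambda>z::real^'d::finite. c)"
proof (induction k arbitrary: c)
  case 0 then show ?case by simp
next
  case (Suc k)
  have "pd (\<lambda>z::real^'d. c) i = (\<lambda>z. 0)" for i
    by (rule ext, rule pd_eq) (rule has_derivative_const)
  then show ?case using Suc by (simp add: Ck_Suc_pd)
qed

lemma Ck_add: "Ck k f \<Longrightarrow> Ck k g \<Longrightarrow> Ck k (\<lambda>z. f z + g z)"
proof (induction k arbitrary: f g)
  case 0 then show ?case by (auto intro: continuous_on_add)
next
  case (Suc k)
  have df: "\<And>x. f differentiable (at x)" and dg: "\<And>x. g differentiable (at x)"
    using Suc.prems by (auto simp: Ck_Suc_pd)
  have "pd (\<lambda>z. f z + g z) i = (\<lambda>z. pd f i z + pd g i z)" for i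
  proof (rule ext)
    fix z
    have D: "((\<lambda>z. f z + g z) has_derivative (\<lambda>h. frechet_derivative f (at z) h + frechet_derivative g (at z) h)) (at z)"
      using df dg by (intro has_derivative_add) (auto simp: frechet_derivative_works[symmetric])
    show "pd (\<lambda>z. f z + g z) i z = pd f i z + pd g i z"
      by (simp only: pd_eq[OF D]) (simp add: pd_def)
  qed
  then show ?case using Suc df dg by (auto simp: Ck_Suc_pd)
qed

lemma Ck_mult:
  fixes f g :: "real^'d::finite \<Rightarrow> real"
  shows "Ck k f \<Longrightarrow> Ck k g \<Longrightarrow> Ck k (\<lambda>z. f z * g z)"
proof (induction k arbitrary: f g)
  case 0 then show ?case by (auto intro: continuous_on_mult)
next
  case (Suc k)
  have df: "\<And>x. f differentiable (at x)" and dg: "\<And>x. g differentiable (at x)"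
    using Suc.prems by (auto simp: Ck_Suc_pd)
  have "pd (\<lambda>z. f z * g z) i = (\<lambda>z. f z * pd g i z + pd f i z * g z)" for i
  proof (rule ext)
    fix z
    have D: "((\<lambda>z. f z * g z) has_derivative (\<lambda>h. f z * frechet_derivative g (at z) h + frechet_derivative f (at z) h * g z)) (at z)"
      using df dg by (intro has_derivative_mult) (auto simp: frechet_derivative_works[symmetric])
    show "pd (\<lambda>z. f z * g z) i z = f z * pd g i z + pd f i z * g z"
      by (simp only: pd_eq[OF D]) (simp add: pd_def)
  qed
  moreover have "Ck k f" "Ck k g" using Suc.prems Ck_Suc_imp by blast+
  ultimately show ?case using Suc df dg by (auto simp: Ck_Suc_pd intro!: Ck_add)
qed

lemma Ck_scaleR_const:
  fixes f :: "real^'d::finite \<Rightarrow> real"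
  shows "Ck k f \<Longrightarrow> Ck k (\<lambda>z. f z *\<^sub>R (v::'b::real_normed_vector))"
proof (induction k arbitrary: f)
  case 0 then show ?case by (auto intro: continuous_intros)
next
  case (Suc k)
  have df: "\<And>x. f differentiable (at x)"
    using Suc.prems by (auto simp: Ck_Suc_pd)
  have "pd (\<lambda>z. f z *\<^sub>R v) i = (\<lambda>z. pd f i z *\<^sub>R v)" for i
  proof (rule ext)
    fix z
    have D: "((\<lambda>z. f z *\<^sub>R v) has_derivative (\<lambda>h. frechet_derivative f (at z) h *\<^sub>R v)) (at z)"
      using df by (intro has_derivative_scaleR_left) (auto simp: frechet_derivative_works[symmetric])
    show "pd (\<lambda>z. f z *\<^sub>R v) i z = pd f i z *\<^sub>R v"
      by (simp only: pd_eq[OF D]) (simp add: pd_def)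
  qed
  then show ?case using Suc df by (auto simp: Ck_Suc_pd)
qed

lemma Ck_sum: "finite S \<Longrightarrow> (\<And>a. a \<in> S \<Longrightarrow> Ck k (f a)) \<Longrightarrow> Ck k (\<lambda>z. \<Sum>a\<in>S. f a z)"
  by (induction S rule: finite_induct) (auto intro: Ck_add Ck_const)

lemma Ck_prod:
  fixes f :: "'a \<Rightarrow> real^'d::finite \<Rightarrow> real"
  shows "finite S \<Longrightarrow> (\<And>a. a \<in> S \<Longrightarrow> Ck k (f a)) \<Longrightarrow> Ck k (\<lambda>z. \<Prod>a\<in>S. f a z)"
  by (induction S rule: finite_induct) (auto intro: Ck_mult Ck_const)

lemma Ck_component: "Ck k (\<lambda>z::real^'d::finite. z $ j)"
proof (cases k)
  case 0 then show ?thesis by (simp add: continuous_on_component)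
next
  case (Suc k')
  have "pd (\<lambda>z::real^'d. z $ j) i = (\<lambda>z. axis i 1 $ j)" for i
    by (rule ext, rule pd_eq) (rule bounded_linear.has_derivative[OF bounded_linear_vec_nth has_derivative_ident])
  moreover have "(\<lambda>z::real^'d. z $ j) differentiable (at x)" for x
    by (rule bounded_linear_imp_differentiable[OF bounded_linear_vec_nth])
  ultimately show ?thesis using Suc by (simp only: Ck_Suc_pd) (simp add: Ck_const)
qed

lemma Ck_power:
  fixes f :: "real^'d::finite \<Rightarrow> real"
  shows "Ck k f \<Longrightarrow> Ck k (\<lambda>z. f z ^ n)"
  by (induction n) (auto intro: Ck_mult Ck_const)

lemma Ck_monomial: "Ck k (monomial \<alpha>)"
  unfolding monomial_def[abs_def]
  by (intro Ck_prod Ck_power Ck_component) auto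


definition D1 :: "(real^'d::finite \<Rightarrow> 'b::real_normed_vector) \<Rightarrow> real^'d \<Rightarrow> real^'d \<Rightarrow> 'b" where
  "D1 g z w = (\<Sum>i\<in>UNIV. (w $ i) *\<^sub>R pd g i z)"

definition D2 :: "(real^'d::finite \<Rightarrow> 'b::real_normed_vector) \<Rightarrow> real^'d \<Rightarrow> real^'d \<Rightarrow> real^'d \<Rightarrow> 'b" where
  "D2 g z a w = (\<Sum>i\<in>UNIV. (w $ i) *\<^sub>R D1 (pd g i) z a)"

lemma D1_has_derivative:
  assumes "Ck (Suc k) g"
  shows "(g has_derivative D1 g z) (at z)"
proof -
  have d: "g differentiable (at z)" using assms by (simp add: Ck_Suc_pd)
  have "frechet_derivative g (at z) = D1 g z"
    by (rule ext) (simp add: frechet_expand[OF d] D1_def)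
  then show ?thesis using d frechet_derivative_works by metis
qed

lemma D1_add: "D1 g z (a + b) = D1 g z a + D1 g z b"
  and D1_scale: "D1 g z (r *\<^sub>R a) = r *\<^sub>R D1 g z a"
  and D1_zero: "D1 g z 0 = 0"
  by (auto simp: D1_def sum.distrib scaleR_add_left scaleR_sum_right)

lemma D1_linear: "linear (D1 g z)"
  by (rule linearI) (auto simp: D1_add D1_scale)

lemma D1_sum: "D1 g z (\<Sum>j\<in>S. a j) = (\<Sum>j\<in>S. D1 g z (a j))"
  by (induction S rule: infinite_finite_induct) (auto simp: D1_add D1_zero)

lemma D2_add: "D2 g z (a + b) w = D2 g z a w + D2 g z b w"
  and D2_scale: "D2 g z (r *\<^sub>R a) w = r *\<^sub>R D2 g z a w"
  and D2_zero: "D2 g z 0 w = 0"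
  by (auto simp: D2_def D1_add D1_scale D1_zero scaleR_add_right sum.distrib scaleR_sum_right mult.commute)

lemma D2_sum: "D2 g z (\<Sum>j\<in>S. a j) w = (\<Sum>j\<in>S. D2 g z (a j) w)"
  by (induction S rule: infinite_finite_induct) (auto simp: D2_add D2_zero)

lemma D2_add2: "D2 g z a (w + u) = D2 g z a w + D2 g z a u"
  and D2_scale2: "D2 g z a (r *\<^sub>R w) = r *\<^sub>R D2 g z a w"
  by (auto simp: D2_def sum.distrib scaleR_add_left scaleR_sum_right)

lemma vd_chain:
  assumes "(Z has_vector_derivative Z') (at t)" "(g has_derivative g') (at (Z t))"
  shows "((\<lambda>t. g (Z t)) has_vector_derivative g' Z') (at t)"
proof -
  have "((g \<circ> Z) has_derivative (g' \<circ> (\<lambda>h. h *\<^sub>R Z'))) (at t)"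
    using assms by (intro diff_chain_at) (auto simp: has_vector_derivative_def)
  moreover have "linear g'" using assms(2) has_derivative_linear by blast
  ultimately show ?thesis
    by (simp add: has_vector_derivative_def o_def linear_scale)
qed

lemma vd_nth:
  "(W has_vector_derivative W') F \<Longrightarrow> ((\<lambda>t. W t $ i) has_vector_derivative W' $ i) F"
  by (rule bounded_linear.has_vector_derivative[OF bounded_linear_vec_nth])

lemma D1_line:
  assumes g: "Ck (Suc (Suc k)) g"
    and Z: "(Z has_vector_derivative Z') (at t)" and W: "(W has_vector_derivative W') (at t)"
  shows "((\<lambda>t. D1 g (Z t) (W t)) has_vector_derivative (D2 g (Z t) Z' (W t) + D1 g (Z t) W')) (at t)"
proof -
  have pg: "Ck (Suc k) (pd g i)" for i using g by (simp add: Ck_Suc_pd)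
  have "((\<lambda>t. (\<Sum>i\<in>UNIV. (W t $ i) *\<^sub>R pd g i (Z t))) has_vector_derivative
          (\<Sum>i\<in>UNIV. (W t $ i) *\<^sub>R D1 (pd g i) (Z t) Z' + (W' $ i) *\<^sub>R pd g i (Z t))) (at t)"
  proof (rule has_vector_derivative_sum)
    fix i
    have 1: "((\<lambda>t. W t $ i) has_field_derivative W' $ i) (at t)"
      using vd_nth[OF W] by (simp add: has_real_derivative_iff_has_vector_derivative)
    have 2: "((\<lambda>t. pd g i (Z t)) has_vector_derivative D1 (pd g i) (Z t) Z') (at t)"
      by (rule vd_chain[OF Z D1_has_derivative[OF pg]])
    show "((\<lambda>t. (W t $ i) *\<^sub>R pd g i (Z t)) has_vector_derivative
          (W t $ i) *\<^sub>R D1 (pd g i) (Z t) Z' + (W' $ i) *\<^sub>R pd g i (Z t)) (at t)"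
      using has_vector_derivative_scaleR[OF 1 2] by simp
  qed
  then show ?thesis by (simp add: D1_def[of g] D2_def sum.distrib)
qed

lemma D1_cont:
  assumes g: "Ck (Suc k) g" and Z: "continuous_on S Z" and W: "continuous_on S W"
  shows "continuous_on S (\<lambda>p. D1 g (Z p) (W p))"
proof -
  have "continuous_on UNIV (pd g i)" for i using g Ck_imp_cont by (auto simp: Ck_Suc_pd)
  then have "continuous_on S (\<lambda>p. pd g i (Z p))" for i
    using continuous_on_compose2[OF _ Z] by blast
  then show ?thesis unfolding D1_def
    by (intro continuous_intros W)
qed

lemma D2_cont:
  assumes g: "Ck (Suc (Suc k)) g" and Z: "continuous_on S Z" and A: "continuous_on S A" and W: "continuous_on S W"
  shows "continuous_on S (\<lambda>p. D2 g (Z p) (A p) (W p))"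
proof -
  have "Ck (Suc k) (pd g i)" for i using g by (auto simp: Ck_Suc_pd)
  then have "continuous_on S (\<lambda>p. D1 (pd g i) (Z p) (A p))" for i
    using D1_cont Z A by blast
  then show ?thesis unfolding D2_def
    by (intro continuous_intros W)
qed


lemma finite_mindex: "finite (mindex D :: ('d::finite \<Rightarrow> nat) set)"
proof -
  have "mindex D \<subseteq> {\<alpha>::'d\<Rightarrow>nat. \<forall>i. \<alpha> i \<in> {..2*D}}"
  proof
    fix \<alpha> :: "'d \<Rightarrow> nat" assume "\<alpha> \<in> mindex D"
    then have s: "(\<Sum>i\<in>UNIV. \<alpha> i) \<le> 2 * D - 1" by (simp add: mindex_def mdeg_def)
    have "\<alpha> i \<le> (\<Sum>i\<in>UNIV. \<alpha> i)" for i by (rule member_le_sum) auto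
    then have "\<alpha> i \<le> 2 * D" for i using s by (meson diff_le_self order_trans)
    then show "\<alpha> \<in> {\<alpha>::'d\<Rightarrow>nat. \<forall>i. \<alpha> i \<in> {..2*D}}" by auto
  qed
  moreover have "finite {\<alpha>::'d\<Rightarrow>nat. \<forall>i. \<alpha> i \<in> {..2*D}}"
    using finite_PiE[of UNIV "\<lambda>_::'d. {..2*D}"] by (simp add: PiE_def Pi_def extensional_def)
  ultimately show ?thesis by (rule finite_subset)
qed

locale pert =
  fixes \<phi> :: "real^'d::finite \<Rightarrow> real^'d" and i1 :: 'd and D :: nat
  assumes phiC: "Ck 3 \<phi>"
begin

definition e1 :: "real^'d" where "e1 = axis i1 1"

definition Pc :: "(('d \<Rightarrow> nat) \<Rightarrow> real) \<Rightarrow> real^'d \<Rightarrow> real" where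
  "Pc c z = (\<Sum>\<alpha>\<in>mindex D. c \<alpha> * monomial \<alpha> z)"
definition DPc :: "(('d \<Rightarrow> nat) \<Rightarrow> real) \<Rightarrow> real^'d \<Rightarrow> real^'d \<Rightarrow> real" where
  "DPc c z w = (\<Sum>\<alpha>\<in>mindex D. c \<alpha> * D1 (monomial \<alpha>) z w)"
definition D2Pc :: "(('d \<Rightarrow> nat) \<Rightarrow> real) \<Rightarrow> real^'d \<Rightarrow> real^'d \<Rightarrow> real^'d \<Rightarrow> real" where
  "D2Pc c z a w = (\<Sum>\<alpha>\<in>mindex D. c \<alpha> * D2 (monomial \<alpha>) z a w)"
definition Df where "Df c z w = D1 \<phi> z w + DPc c z w *\<^sub>R e1"
definition D2f where "D2f c z a w = D2 \<phi> z a w + D2Pc c z a w *\<^sub>R e1"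

lemma f_eq: "perturb i1 D \<phi> c z = \<phi> z + Pc c z *\<^sub>R e1"
  by (simp add: perturb_def Pc_def e1_def)

definition Orb where "Orb c x k = (perturb i1 D \<phi> c ^^ k) x"

lemma Orb_0[simp]: "Orb c x 0 = x"
  and Orb_Suc: "Orb c x (Suc k) = \<phi> (Orb c x k) + Pc c (Orb c x k) *\<^sub>R e1"
  by (simp_all add: Orb_def f_eq)

primrec Wv where
  "Wv c x v 0 = v"
| "Wv c x v (Suc k) = Df c (Orb c x k) (Wv c x v k)"

primrec dO where
  "dO c x \<gamma> \<xi> 0 = \<xi>"
| "dO c x \<gamma> \<xi> (Suc k) = Df c (Orb c x k) (dO c x \<gamma> \<xi> k) + Pc \<gamma> (Orb c x k) *\<^sub>R e1"

primrec dW where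
  "dW c x v \<gamma> \<xi> \<nu> 0 = \<nu>"
| "dW c x v \<gamma> \<xi> \<nu> (Suc k) = D2f c (Orb c x k) (dO c x \<gamma> \<xi> k) (Wv c x v k)
      + Df c (Orb c x k) (dW c x v \<gamma> \<xi> \<nu> k) + DPc \<gamma> (Orb c x k) (Wv c x v k) *\<^sub>R e1"

lemma phiC1: "Ck (Suc (Suc 0)) \<phi>" and phiC1': "Ck (Suc 0) \<phi>"
  using phiC Ck_le[of 3 \<phi>] by (auto simp: numeral_eq_Suc)

lemma monC: "Ck (Suc (Suc 0)) (monomial \<alpha>)" by (rule Ck_monomial)

lemma Pc_line:
  assumes Z: "(Z has_vector_derivative Z') (at t)"
  shows "((\<lambda>s. Pc (\<lambda>\<alpha>. c \<alpha> + s * \<gamma> \<alpha>) (Z s)) has_vector_derivative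
           (Pc \<gamma> (Z t) + DPc (\<lambda>\<alpha>. c \<alpha> + t * \<gamma> \<alpha>) (Z t) Z')) (at t)"
proof -
  have "((\<lambda>s. \<Sum>\<alpha>\<in>mindex D. (c \<alpha> + s * \<gamma> \<alpha>) * monomial \<alpha> (Z s)) has_vector_derivative
        (\<Sum>\<alpha>\<in>mindex D. (c \<alpha> + t * \<gamma> \<alpha>) * D1 (monomial \<alpha>) (Z t) Z' + \<gamma> \<alpha> * monomial \<alpha> (Z t))) (at t)"
  proof (rule has_vector_derivative_sum)
    fix \<alpha>
    have 1: "((\<lambda>s. c \<alpha> + s * \<gamma> \<alpha>) has_vector_derivative \<gamma> \<alpha>) (at t)"
      using has_vector_derivative_add[OF has_vector_derivative_const
           has_vector_derivative_mult_left[OF has_vector_derivative_id, of "\<gamma> \<alpha>"]] by simp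
    have 2: "((\<lambda>s. monomial \<alpha> (Z s)) has_vector_derivative D1 (monomial \<alpha>) (Z t) Z') (at t)"
      by (rule vd_chain[OF Z D1_has_derivative[OF monC]])
    show "((\<lambda>s. (c \<alpha> + s * \<gamma> \<alpha>) * monomial \<alpha> (Z s)) has_vector_derivative
        (c \<alpha> + t * \<gamma> \<alpha>) * D1 (monomial \<alpha>) (Z t) Z' + \<gamma> \<alpha> * monomial \<alpha> (Z t)) (at t)"
      using has_vector_derivative_mult[OF 1 2] by simp
  qed
  then show ?thesis by (simp add: Pc_def DPc_def sum.distrib add.commute)
qed

lemma DPc_line:
  assumes Z: "(Z has_vector_derivative Z') (at t)" and W: "(W has_vector_derivative W') (at t)"
  shows "((\<lambda>s. DPc (\<lambda>\<alpha>. c \<alpha> + s * \<gamma> \<alpha>) (Z s) (W s)) has_vector_derivative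
           (DPc \<gamma> (Z t) (W t) + D2Pc (\<lambda>\<alpha>. c \<alpha> + t * \<gamma> \<alpha>) (Z t) Z' (W t)
             + DPc (\<lambda>\<alpha>. c \<alpha> + t * \<gamma> \<alpha>) (Z t) W')) (at t)"
proof -
  have "((\<lambda>s. \<Sum>\<alpha>\<in>mindex D. (c \<alpha> + s * \<gamma> \<alpha>) * D1 (monomial \<alpha>) (Z s) (W s)) has_vector_derivative
        (\<Sum>\<alpha>\<in>mindex D. (c \<alpha> + t * \<gamma> \<alpha>) * (D2 (monomial \<alpha>) (Z t) Z' (W t) + D1 (monomial \<alpha>) (Z t) W')
            + \<gamma> \<alpha> * D1 (monomial \<alpha>) (Z t) (W t))) (at t)"
  proof (rule has_vector_derivative_sum)
    fix \<alpha>
    have 1: "((\<lambda>s. c \<alpha> + s * \<gamma> \<alpha>) has_vector_derivative \<gamma> \<alpha>) (at t)"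
      using has_vector_derivative_add[OF has_vector_derivative_const
           has_vector_derivative_mult_left[OF has_vector_derivative_id, of "\<gamma> \<alpha>"]] by simp
    have 2: "((\<lambda>s. D1 (monomial \<alpha>) (Z s) (W s)) has_vector_derivative
               D2 (monomial \<alpha>) (Z t) Z' (W t) + D1 (monomial \<alpha>) (Z t) W') (at t)"
      by (rule D1_line[OF monC Z W])
    show "((\<lambda>s. (c \<alpha> + s * \<gamma> \<alpha>) * D1 (monomial \<alpha>) (Z s) (W s)) has_vector_derivative
        (c \<alpha> + t * \<gamma> \<alpha>) * (D2 (monomial \<alpha>) (Z t) Z' (W t) + D1 (monomial \<alpha>) (Z t) W')
            + \<gamma> \<alpha> * D1 (monomial \<alpha>) (Z t) (W t)) (at t)"
      using has_vector_derivative_mult[OF 1 2] by simp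
  qed
  then show ?thesis by (simp add: DPc_def D2Pc_def sum.distrib distrib_left ac_simps)
qed

lemma f_line:
  assumes Z: "(Z has_vector_derivative Z') (at t)"
  shows "((\<lambda>s. \<phi> (Z s) + Pc (\<lambda>\<alpha>. c \<alpha> + s * \<gamma> \<alpha>) (Z s) *\<^sub>R e1) has_vector_derivative
           (Df (\<lambda>\<alpha>. c \<alpha> + t * \<gamma> \<alpha>) (Z t) Z' + Pc \<gamma> (Z t) *\<^sub>R e1)) (at t)"
proof -
  have 1: "((\<lambda>s. \<phi> (Z s)) has_vector_derivative D1 \<phi> (Z t) Z') (at t)"
    by (rule vd_chain[OF Z D1_has_derivative[OF phiC1']])
  have 2: "((\<lambda>s. Pc (\<lambda>\<alpha>. c \<alpha> + s * \<gamma> \<alpha>) (Z s) *\<^sub>R e1) has_vector_derivative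
            (Pc \<gamma> (Z t) + DPc (\<lambda>\<alpha>. c \<alpha> + t * \<gamma> \<alpha>) (Z t) Z') *\<^sub>R e1) (at t)"
    using has_vector_derivative_scaleR[OF Pc_line[OF Z, unfolded has_real_derivative_iff_has_vector_derivative[symmetric]]
        has_vector_derivative_const[of e1]] by simp
  show ?thesis using has_vector_derivative_add[OF 1 2]
    by (simp add: Df_def scaleR_add_left algebra_simps)
qed

lemma Df_line:
  assumes Z: "(Z has_vector_derivative Z') (at t)" and W: "(W has_vector_derivative W') (at t)"
  shows "((\<lambda>s. Df (\<lambda>\<alpha>. c \<alpha> + s * \<gamma> \<alpha>) (Z s) (W s)) has_vector_derivative
           (D2f (\<lambda>\<alpha>. c \<alpha> + t * \<gamma> \<alpha>) (Z t) Z' (W t) + Df (\<lambda>\<alpha>. c \<alpha> + t * \<gamma> \<alpha>) (Z t) W'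
             + DPc \<gamma> (Z t) (W t) *\<^sub>R e1)) (at t)"
proof -
  have 1: "((\<lambda>s. D1 \<phi> (Z s) (W s)) has_vector_derivative D2 \<phi> (Z t) Z' (W t) + D1 \<phi> (Z t) W') (at t)"
    by (rule D1_line[OF phiC1 Z W])
  have 2: "((\<lambda>s. DPc (\<lambda>\<alpha>. c \<alpha> + s * \<gamma> \<alpha>) (Z s) (W s) *\<^sub>R e1) has_vector_derivative
            (DPc \<gamma> (Z t) (W t) + D2Pc (\<lambda>\<alpha>. c \<alpha> + t * \<gamma> \<alpha>) (Z t) Z' (W t)
             + DPc (\<lambda>\<alpha>. c \<alpha> + t * \<gamma> \<alpha>) (Z t) W') *\<^sub>R e1) (at t)"
    using has_vector_derivative_scaleR[OF DPc_line[OF Z W, unfolded has_real_derivative_iff_has_vector_derivative[symmetric]]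
        has_vector_derivative_const[of e1]] by simp
  show ?thesis using has_vector_derivative_add[OF 1 2] unfolding Df_def D2f_def
    by (simp add: scaleR_add_left algebra_simps)
qed

lemma line:
  fixes c \<gamma> :: "('d \<Rightarrow> nat) \<Rightarrow> real"
  shows "((\<lambda>s. Orb (\<lambda>\<alpha>. c \<alpha> + s * \<gamma> \<alpha>) (x + s *\<^sub>R \<xi>) k) has_vector_derivative
           dO (\<lambda>\<alpha>. c \<alpha> + t * \<gamma> \<alpha>) (x + t *\<^sub>R \<xi>) \<gamma> \<xi> k) (at t) \<and>
         ((\<lambda>s. Wv (\<lambda>\<alpha>. c \<alpha> + s * \<gamma> \<alpha>) (x + s *\<^sub>R \<xi>) (v + s *\<^sub>R \<nu>) k) has_vector_derivative
           dW (\<lambda>\<alpha>. c \<alpha> + t * \<gamma> \<alpha>) (x + t *\<^sub>R \<xi>) (v + t *\<^sub>R \<nu>) \<gamma> \<xi> \<nu> k) (at t)"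
proof (induction k)
  case 0
  have "((\<lambda>s. x + s *\<^sub>R \<xi>) has_vector_derivative \<xi>) (at t)"
    using has_vector_derivative_add[OF has_vector_derivative_const
        has_vector_derivative_scaleR[OF DERIV_ident has_vector_derivative_const[of \<xi>]]] by simp
  moreover have "((\<lambda>s. v + s *\<^sub>R \<nu>) has_vector_derivative \<nu>) (at t)"
    using has_vector_derivative_add[OF has_vector_derivative_const
        has_vector_derivative_scaleR[OF DERIV_ident has_vector_derivative_const[of \<nu>]]] by simp
  ultimately show ?case by simp
next
  case (Suc k)
  note A = Suc.IH[THEN conjunct1] and B = Suc.IH[THEN conjunct2]
  show ?case
    using f_line[OF A, of c \<gamma>] Df_line[OF A B, of c \<gamma>]
    by (simp add: Orb_Suc)
qed

end


context pert
begin

lemma Pc_has_derivative: "((\<lambda>z. Pc c z) has_derivative DPc c z) (at z)"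
proof -
  have "((\<lambda>z. \<Sum>\<alpha>\<in>mindex D. c \<alpha> * monomial \<alpha> z) has_derivative
          (\<lambda>w. \<Sum>\<alpha>\<in>mindex D. c \<alpha> * D1 (monomial \<alpha>) z w)) (at z)"
    by (intro has_derivative_sum has_derivative_mult_right D1_has_derivative[OF monC])
  then show ?thesis by (simp add: Pc_def[abs_def] DPc_def[abs_def])
qed

lemma f_has_derivative: "(perturb i1 D \<phi> c has_derivative Df c z) (at z)"
proof -
  have "((\<lambda>z. \<phi> z + Pc c z *\<^sub>R e1) has_derivative (\<lambda>w. D1 \<phi> z w + DPc c z w *\<^sub>R e1)) (at z)"
    by (intro has_derivative_add has_derivative_scaleR_left D1_has_derivative[OF phiC1'] Pc_has_derivative)
  then show ?thesis by (simp add: f_eq[abs_def] Df_def[abs_def])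
qed

lemma iter_has_derivative: "((perturb i1 D \<phi> c ^^ k) has_derivative (\<lambda>v. Wv c x v k)) (at x)"
proof (induction k)
  case 0 then show ?case by (simp add: has_derivative_ident id_def[symmetric])
next
  case (Suc k)
  have "((perturb i1 D \<phi> c \<circ> (perturb i1 D \<phi> c ^^ k)) has_derivative (Df c (Orb c x k) \<circ> (\<lambda>v. Wv c x v k))) (at x)"
    by (rule diff_chain_at[OF Suc]) (simp add: Orb_def f_has_derivative)
  then show ?case by (simp add: o_def)
qed

lemma iter_comp_deriv:
  "((\<lambda>y. (perturb i1 D \<phi> c ^^ k) y $ i1) has_derivative (\<lambda>v. Wv c x v k $ i1)) (at x)"
  using bounded_linear.has_derivative[OF bounded_linear_vec_nth iter_has_derivative] .

lemma delay_immersive_iff: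
  "delay_immersive_at i1 D (perturb i1 D \<phi> c) x \<longleftrightarrow> (\<forall>v. v \<noteq> 0 \<longrightarrow> (\<exists>j<D. Wv c x v j $ i1 \<noteq> 0))"
  unfolding delay_immersive_at_def
  using iter_comp_deriv frechet_derivative_at differentiable_def by metis

lemma DPc_add: "DPc c z (a + b) = DPc c z a + DPc c z b"
  and DPc_scale: "DPc c z (r *\<^sub>R a) = r * DPc c z a"
  by (auto simp: DPc_def D1_add D1_scale sum.distrib distrib_left sum_distrib_left ac_simps)

lemma Df_add: "Df c z (a + b) = Df c z a + Df c z b"
  and Df_scale: "Df c z (r *\<^sub>R a) = r *\<^sub>R Df c z a"
  and Df_zero: "Df c z 0 = 0"
  by (auto simp: Df_def D1_add D1_scale DPc_add DPc_scale D1_zero scaleR_add_left algebra_simps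
     DPc_scale[of c z 0 0, simplified])

lemma Df_sum: "Df c z (\<Sum>j\<in>S. a j) = (\<Sum>j\<in>S. Df c z (a j))"
  by (induction S rule: infinite_finite_induct) (auto simp: Df_add Df_zero)

lemma D2Pc_add: "D2Pc c z (a + b) w = D2Pc c z a w + D2Pc c z b w"
  and D2Pc_scale: "D2Pc c z (r *\<^sub>R a) w = r * D2Pc c z a w"
  by (auto simp: D2Pc_def D2_add D2_scale sum.distrib distrib_left sum_distrib_left ac_simps)

lemma D2f_add: "D2f c z (a + b) w = D2f c z a w + D2f c z b w"
  and D2f_scale: "D2f c z (r *\<^sub>R a) w = r *\<^sub>R D2f c z a w"
  and D2f_zero: "D2f c z 0 w = 0"
  by (auto simp: D2f_def D2_add D2_scale D2Pc_add D2Pc_scale D2_zero scaleR_add_left algebra_simps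
     D2Pc_scale[of c z 0 0, simplified])

lemma D2f_sum: "D2f c z (\<Sum>j\<in>S. a j) w = (\<Sum>j\<in>S. D2f c z (a j) w)"
  by (induction S rule: infinite_finite_induct) (auto simp: D2f_add D2f_zero)

lemma Pc_lin: "Pc (\<lambda>\<alpha>. a * g1 \<alpha> + b * g2 \<alpha>) z = a * Pc g1 z + b * Pc g2 z"
  by (simp add: Pc_def sum.distrib sum_distrib_left algebra_simps)

lemma DPc_lin: "DPc (\<lambda>\<alpha>. a * g1 \<alpha> + b * g2 \<alpha>) z w = a * DPc g1 z w + b * DPc g2 z w"
  by (simp add: DPc_def sum.distrib sum_distrib_left algebra_simps)

lemma dO_lin:
  "dO c x (\<lambda>\<alpha>. a * g1 \<alpha> + b * g2 \<alpha>) (a *\<^sub>R \<xi>1 + b *\<^sub>R \<xi>2) k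
     = a *\<^sub>R dO c x g1 \<xi>1 k + b *\<^sub>R dO c x g2 \<xi>2 k"
  by (induction k) (simp_all add: Pc_lin Df_add Df_scale algebra_simps)

lemma dW_lin:
  "dW c x v (\<lambda>\<alpha>. a * g1 \<alpha> + b * g2 \<alpha>) (a *\<^sub>R \<xi>1 + b *\<^sub>R \<xi>2) (a *\<^sub>R \<nu>1 + b *\<^sub>R \<nu>2) k
     = a *\<^sub>R dW c x v g1 \<xi>1 \<nu>1 k + b *\<^sub>R dW c x v g2 \<xi>2 \<nu>2 k"
  by (induction k) (simp_all add: dO_lin DPc_lin D2f_add D2f_scale Df_add Df_scale algebra_simps)

definition delta :: "('d \<Rightarrow> nat) \<Rightarrow> ('d \<Rightarrow> nat) \<Rightarrow> real" where
  "delta \<alpha> = (\<lambda>\<beta>. if \<beta> = \<alpha> then 1 else 0)"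

lemma delta_mult: "delta \<alpha> \<beta> * m = (if \<beta> = \<alpha> then m else 0)"
  by (simp add: delta_def)

lemma Pc_delta: "\<alpha> \<in> mindex D \<Longrightarrow> Pc (delta \<alpha>) z = monomial \<alpha> z"
  by (simp add: Pc_def delta_mult finite_mindex)

lemma DPc_delta: "\<alpha> \<in> mindex D \<Longrightarrow> DPc (delta \<alpha>) z w = D1 (monomial \<alpha>) z w"
  by (simp add: DPc_def delta_mult finite_mindex)

lemma Pc_expand: "Pc \<gamma> z = (\<Sum>\<alpha>\<in>mindex D. \<gamma> \<alpha> * Pc (delta \<alpha>) z)"
  unfolding Pc_def[of \<gamma>] by (rule sum.cong) (simp_all add: Pc_delta)

lemma DPc_expand: "DPc \<gamma> z w = (\<Sum>\<alpha>\<in>mindex D. \<gamma> \<alpha> * DPc (delta \<alpha>) z w)"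
  unfolding DPc_def[of \<gamma>] by (rule sum.cong) (simp_all add: DPc_delta)

lemma dO_expand: "dO c x \<gamma> 0 k = (\<Sum>\<alpha>\<in>mindex D. \<gamma> \<alpha> *\<^sub>R dO c x (delta \<alpha>) 0 k)"
proof (induction k)
  case 0 then show ?case by simp
next
  case (Suc k)
  show ?case
    apply (simp add: Suc Df_sum Df_scale)
    apply (subst Pc_expand)
    apply (simp add: scaleR_sum_left sum.distrib[symmetric] scaleR_add_right)
    done
qed

lemma dW_expand: "dW c x v \<gamma> 0 0 k = (\<Sum>\<alpha>\<in>mindex D. \<gamma> \<alpha> *\<^sub>R dW c x v (delta \<alpha>) 0 0 k)"
proof (induction k)
  case 0 then show ?case by simp
next
  case (Suc k)
  show ?case
    apply (simp add: Suc Df_sum Df_scale)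
    apply (subst dO_expand)
    apply (subst DPc_expand)
    apply (simp add: D2f_sum D2f_scale scaleR_sum_left sum.distrib[symmetric] scaleR_add_right)
    done
qed

end


context pert
begin

lemma coord_cont: "continuous_on S C \<Longrightarrow> continuous_on S (\<lambda>p. C p \<alpha>)"
  by (rule continuous_on_product_then_coordinatewise)

lemma mon_cont: "continuous_on S Z \<Longrightarrow> continuous_on S (\<lambda>p. monomial \<alpha> (Z p))"
  using continuous_on_compose2[OF Ck_imp_cont[OF Ck_monomial[of 0 \<alpha>]]] by blast

lemma phi_cont: "continuous_on S Z \<Longrightarrow> continuous_on S (\<lambda>p. \<phi> (Z p))"
  using continuous_on_compose2[OF Ck_imp_cont[OF phiC]] by blast

lemma Pc_cont: assumes C: "continuous_on S C" and Z: "continuous_on S Z"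
  shows "continuous_on S (\<lambda>p. Pc (C p) (Z p))"
proof -
  have "continuous_on S (\<lambda>p. C p \<alpha> * monomial \<alpha> (Z p))" for \<alpha>
    using continuous_on_mult[OF coord_cont[OF C] mon_cont[OF Z]] .
  then show ?thesis unfolding Pc_def by (rule continuous_on_sum)
qed

lemma DPc_cont: assumes C: "continuous_on S C" and Z: "continuous_on S Z" and W: "continuous_on S W"
  shows "continuous_on S (\<lambda>p. DPc (C p) (Z p) (W p))"
proof -
  have "continuous_on S (\<lambda>p. C p \<alpha> * D1 (monomial \<alpha>) (Z p) (W p))" for \<alpha>
    using continuous_on_mult[OF coord_cont[OF C] D1_cont[OF monC Z W]] .
  then show ?thesis unfolding DPc_def by (rule continuous_on_sum)
qed

lemma D2Pc_cont: assumes C: "continuous_on S C" and Z: "continuous_on S Z" and A: "continuous_on S A"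
   and W: "continuous_on S W"
  shows "continuous_on S (\<lambda>p. D2Pc (C p) (Z p) (A p) (W p))"
proof -
  have "continuous_on S (\<lambda>p. C p \<alpha> * D2 (monomial \<alpha>) (Z p) (A p) (W p))" for \<alpha>
    using continuous_on_mult[OF coord_cont[OF C] D2_cont[OF monC Z A W]] .
  then show ?thesis unfolding D2Pc_def by (rule continuous_on_sum)
qed

lemma Df_cont: assumes C: "continuous_on S C" and Z: "continuous_on S Z" and W: "continuous_on S W"
  shows "continuous_on S (\<lambda>p. Df (C p) (Z p) (W p))"
  unfolding Df_def
  by (rule continuous_on_add[OF D1_cont[OF phiC1 Z W] continuous_on_scaleR[OF DPc_cont[OF C Z W] continuous_on_const]])

lemma D2f_cont: assumes C: "continuous_on S C" and Z: "continuous_on S Z" and A: "continuous_on S A"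
   and W: "continuous_on S W"
  shows "continuous_on S (\<lambda>p. D2f (C p) (Z p) (A p) (W p))"
  unfolding D2f_def
  by (rule continuous_on_add[OF D2_cont[OF phiC1 Z A W] continuous_on_scaleR[OF D2Pc_cont[OF C Z A W] continuous_on_const]])

lemma all_cont:
  assumes C: "continuous_on S C" and X: "continuous_on S X" and V: "continuous_on S V"
    and G: "continuous_on S G" and Xi: "continuous_on S Xi" and N: "continuous_on S N"
  shows "continuous_on S (\<lambda>p. Orb (C p) (X p) k) \<and> continuous_on S (\<lambda>p. Wv (C p) (X p) (V p) k) \<and>
         continuous_on S (\<lambda>p. dO (C p) (X p) (G p) (Xi p) k) \<and>
         continuous_on S (\<lambda>p. dW (C p) (X p) (V p) (G p) (Xi p) (N p) k)"
proof (induction k)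
  case 0 then show ?case using X V Xi N by simp
next
  case (Suc k)
  then have o: "continuous_on S (\<lambda>p. Orb (C p) (X p) k)" and w: "continuous_on S (\<lambda>p. Wv (C p) (X p) (V p) k)"
    and d: "continuous_on S (\<lambda>p. dO (C p) (X p) (G p) (Xi p) k)"
    and e: "continuous_on S (\<lambda>p. dW (C p) (X p) (V p) (G p) (Xi p) (N p) k)" by blast+
  have 1: "continuous_on S (\<lambda>p. Orb (C p) (X p) (Suc k))"
    unfolding Orb_Suc by (rule continuous_on_add[OF phi_cont[OF o] continuous_on_scaleR[OF Pc_cont[OF C o] continuous_on_const]])
  have 2: "continuous_on S (\<lambda>p. Wv (C p) (X p) (V p) (Suc k))"
    unfolding Wv.simps by (rule Df_cont[OF C o w])
  have 3: "continuous_on S (\<lambda>p. dO (C p) (X p) (G p) (Xi p) (Suc k))"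
    unfolding dO.simps by (rule continuous_on_add[OF Df_cont[OF C o d] continuous_on_scaleR[OF Pc_cont[OF G o] continuous_on_const]])
  have 4: "continuous_on S (\<lambda>p. dW (C p) (X p) (V p) (G p) (Xi p) (N p) (Suc k))"
    unfolding dW.simps by (rule continuous_on_add[OF continuous_on_add[OF D2f_cont[OF C o d w] Df_cont[OF C o e]] continuous_on_scaleR[OF DPc_cont[OF G o w] continuous_on_const]])
  show ?case using 1 2 3 4 by blast
qed

end


inductive polyd :: "nat \<Rightarrow> (real^'d::finite \<Rightarrow> real) \<Rightarrow> bool" where
  pmono: "mdeg \<alpha> \<le> n \<Longrightarrow> polyd n (monomial \<alpha>)"
| pzero: "polyd n (\<lambda>z. 0)"
| padd: "polyd n f \<Longrightarrow> polyd n g \<Longrightarrow> polyd n (\<lambda>z. f z + g z)"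
| psmul: "polyd n f \<Longrightarrow> polyd n (\<lambda>z. a * f z)"

lemma polyd_le: "polyd n f \<Longrightarrow> n \<le> m \<Longrightarrow> polyd m f"
  by (induction rule: polyd.induct) (auto intro: polyd.intros)

lemma monomial_mult: "monomial \<alpha> z * monomial \<beta> z = monomial (\<lambda>i. \<alpha> i + \<beta> i) z"
  by (simp add: monomial_def power_add prod.distrib)

lemma mdeg_add: "mdeg (\<lambda>i. \<alpha> i + \<beta> i) = mdeg \<alpha> + mdeg \<beta>"
  by (simp add: mdeg_def sum.distrib)

lemma polyd_mult_mono: "polyd m g \<Longrightarrow> mdeg \<alpha> \<le> n \<Longrightarrow> polyd (n + m) (\<lambda>z. monomial \<alpha> z * g z)"
proof (induction rule: polyd.induct)
  case (pmono \<beta> m)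
  then have "mdeg (\<lambda>i. \<alpha> i + \<beta> i) \<le> n + m" by (simp add: mdeg_add)
  from polyd.pmono[OF this] show ?case by (simp add: monomial_mult)
next
  case (pzero m) then show ?case using polyd.pzero by simp
next
  case (padd m f g) then show ?case using polyd.padd[of "n+m"] by (simp add: distrib_left)
next
  case (psmul m f a) then show ?case using polyd.psmul[of "n+m" _ a] by (simp add: ac_simps)
qed

lemma polyd_mult: "polyd n f \<Longrightarrow> polyd m g \<Longrightarrow> polyd (n + m) (\<lambda>z. f z * g z)"
proof (induction rule: polyd.induct)
  case (pmono \<alpha> n) then show ?case using polyd_mult_mono by blast
next
  case (pzero n) then show ?case using polyd.pzero by simp
next
  case (padd n f1 f2) then show ?case using polyd.padd[of "n+m"] by (simp add: distrib_right)
next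
  case (psmul n f a) then show ?case using polyd.psmul[of "n+m" _ a] by (simp add: ac_simps)
qed

lemma polyd_const: "polyd n (\<lambda>z::real^'d::finite. a)"
proof -
  have "monomial (\<lambda>_. 0) = (\<lambda>z::real^'d. 1)" by (simp add: monomial_def[abs_def])
  moreover have "polyd n (monomial (\<lambda>_::'d. 0))" by (rule pmono) (simp add: mdeg_def)
  ultimately have "polyd n (\<lambda>z::real^'d. 1)" by simp
  from psmul[OF this, of a] show ?thesis by simp
qed

lemma polyd_comp: "polyd 1 (\<lambda>z::real^'d::finite. z $ i)"
proof -
  have "monomial (\<lambda>j. if j = i then 1 else 0) = (\<lambda>z::real^'d. z $ i)"
    by (rule ext) (simp add: monomial_def power_0 if_distrib[of "power _"] prod.delta cong: if_cong)
  moreover have "polyd 1 (monomial (\<lambda>j::'d. if j = i then 1 else 0))" by (rule pmono) (simp add: mdeg_def)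
  ultimately show ?thesis by simp
qed

lemma polyd_sum: "finite S \<Longrightarrow> (\<And>a. a \<in> S \<Longrightarrow> polyd n (f a)) \<Longrightarrow> polyd n (\<lambda>z. \<Sum>a\<in>S. f a z)"
  by (induction S rule: finite_induct) (auto intro: polyd.intros)

lemma polyd_prod: "finite S \<Longrightarrow> (\<And>a. a \<in> S \<Longrightarrow> polyd n (f a)) \<Longrightarrow> polyd (n * card S) (\<lambda>z. \<Prod>a\<in>S. f a z)"
proof (induction S rule: finite_induct)
  case empty then show ?case by (simp add: polyd_const)
next
  case (insert x F)
  then have "polyd (n + n * card F) (\<lambda>z. f x z * (\<Prod>a\<in>F. f a z))"
    by (intro polyd_mult) auto
  then show ?case using insert by simp
qed

lemma polyd_diff: "polyd n f \<Longrightarrow> polyd n g \<Longrightarrow> polyd n (\<lambda>z. f z - g z)"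
  using padd[of n f "\<lambda>z. (-1) * g z"] psmul[of n g "-1"] by simp

lemma polyd_inner_lin: "polyd 1 (\<lambda>z::real^'d::finite. (z - y) \<bullet> w)"
proof -
  have "(\<lambda>z::real^'d. (z - y) \<bullet> w) = (\<lambda>z. \<Sum>i\<in>UNIV. w $ i * (z $ i - y $ i))"
    by (rule ext) (simp add: inner_vec_def mult.commute)
  moreover have "polyd 1 (\<lambda>z::real^'d. \<Sum>i\<in>UNIV. w $ i * (z $ i - y $ i))"
    by (intro polyd_sum psmul polyd_diff polyd_comp polyd_const) auto
  ultimately show ?thesis by simp
qed

lemma polyd_sq: "polyd 2 (\<lambda>z::real^'d::finite. (z - y) \<bullet> (z - y))"
proof -
  have "(\<lambda>z::real^'d. (z - y) \<bullet> (z - y)) = (\<lambda>z. \<Sum>i\<in>UNIV. (z $ i - y $ i) * (z $ i - y $ i))"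
    by (rule ext) (simp add: inner_vec_def)
  moreover have "polyd (1+1) (\<lambda>z::real^'d. \<Sum>i\<in>UNIV. (z $ i - y $ i) * (z $ i - y $ i))"
    by (intro polyd_sum polyd_mult polyd_diff polyd_comp polyd_const) auto
  ultimately show ?thesis by (simp add: numeral_2_eq_2)
qed

context pert
begin

lemma polyd_coeffs: "polyd n f \<Longrightarrow> n \<le> 2 * D - 1 \<Longrightarrow> \<exists>\<gamma>. \<forall>z. f z = Pc \<gamma> z"
proof (induction rule: polyd.induct)
  case (pmono \<alpha> n)
  then have "\<alpha> \<in> mindex D" by (simp add: mindex_def)
  then show ?case using Pc_delta by metis
next
  case (pzero n) then show ?case by (intro exI[of _ "\<lambda>_. 0"]) (simp add: Pc_def)
next
  case (padd n f g)
  then obtain g1 g2 where "\<forall>z. f z = Pc g1 z" "\<forall>z. g z = Pc g2 z" by auto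
  then show ?case using Pc_lin[of 1 g1 1 g2] by (intro exI[of _ "\<lambda>\<alpha>. 1 * g1 \<alpha> + 1 * g2 \<alpha>"]) simp
next
  case (psmul n f a)
  then obtain g1 where "\<forall>z. f z = Pc g1 z" by auto
  then show ?case using Pc_lin[of a g1 0 g1] by (intro exI[of _ "\<lambda>\<alpha>. a * g1 \<alpha> + 0 * g1 \<alpha>"]) simp
qed

lemma DPc_eq_deriv: "(q has_derivative Q) (at z) \<Longrightarrow> (\<forall>z. q z = Pc \<gamma> z) \<Longrightarrow> DPc \<gamma> z w = Q w"
proof -
  assume q: "(q has_derivative Q) (at z)" and e: "\<forall>z. q z = Pc \<gamma> z"
  then have "q = Pc \<gamma>" by auto
  with Pc_has_derivative[of \<gamma> z] have "(q has_derivative DPc \<gamma> z) (at z)" by simp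
  with q show ?thesis using has_derivative_unique by metis
qed

lemma Df_inj:
  assumes "Ck_diffeomorphism 3 (perturb i1 D \<phi> c)" and "Df c z w = 0"
  shows "w = 0"
proof -
  let ?f = "perturb i1 D \<phi> c"
  have bij: "bij ?f" and ci: "Ck 3 (inv ?f)" using assms(1) by (auto simp: Ck_diffeomorphism_def)
  have "inv ?f differentiable (at (?f z))" using ci by (simp add: numeral_eq_Suc Ck_Suc_pd)
  then obtain g' where g': "(inv ?f has_derivative g') (at (?f z))" by (auto simp: differentiable_def)
  have "((inv ?f \<circ> ?f) has_derivative (g' \<circ> Df c z)) (at z)"
    by (rule diff_chain_at[OF f_has_derivative g'])
  moreover have "inv ?f \<circ> ?f = id" using bij by (simp add: bij_is_inj)
  ultimately have "(id has_derivative (g' \<circ> Df c z)) (at z)" by simp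
  then have "g' \<circ> Df c z = id" using has_derivative_id has_derivative_unique by (metis id_def)
  then have "g' (Df c z w) = w" by (metis comp_apply id_apply)
  moreover have "linear g'" using g' has_derivative_linear by blast
  ultimately show ?thesis using assms(2) linear_0 by metis
qed

lemma Wv_nonzero:
  assumes "Ck_diffeomorphism 3 (perturb i1 D \<phi> c)" and "v \<noteq> 0"
  shows "Wv c x v k \<noteq> 0"
  by (induction k) (use assms Df_inj in auto)

end


lemma sq_deriv_zero:
  "((\<lambda>z::real^'d::finite. (z - y) \<bullet> (z - y)) has_derivative (\<lambda>h. 0)) (at y)"
proof -
  have "((\<lambda>z::real^'d. (z - y) \<bullet> (z - y)) has_derivative (\<lambda>h. (y - y) \<bullet> h + h \<bullet> (y - y))) (at y)"
    by (intro derivative_eq_intros) auto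
  then show ?thesis by simp
qed

context pert
begin

lemma polyd_has_derivative:
  fixes q :: "real^'d \<Rightarrow> real"
  assumes "polyd n q" "n \<le> 2 * D - 1"
  obtains Q where "\<And>z. (q has_derivative Q z) (at z)"
proof -
  obtain \<gamma> where "\<forall>z. q z = Pc \<gamma> z" using polyd_coeffs[OF assms] by blast
  then have "q = Pc \<gamma>" by auto
  then show ?thesis using Pc_has_derivative that by metis
qed

lemma interp_poly:
  fixes ys :: "nat \<Rightarrow> real^'d"
  assumes dist: "\<And>m m'. m < K \<Longrightarrow> m' < K \<Longrightarrow> m \<noteq> m' \<Longrightarrow> ys m \<noteq> ys m'"
    and j0: "j0 < K" and KD: "K \<le> D" and w: "w \<noteq> 0"
  shows "\<exists>\<gamma>. (\<forall>m<K. Pc \<gamma> (ys m) = 0) \<and> (\<forall>m<K. m \<noteq> j0 \<longrightarrow> (\<forall>h. DPc \<gamma> (ys m) h = 0))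
            \<and> DPc \<gamma> (ys j0) w \<noteq> 0"
proof -
  define M where "M = {..<K} - {j0}"
  have finM: "finite M" by (simp add: M_def)
  have cardM: "card M = K - 1" using j0 by (simp add: M_def)
  define s where "s m z = (z - ys m) \<bullet> (z - ys m)" for m z
  define R where "R z = (\<Prod>m\<in>M. s m z)" for z
  define l where "l z = (z - ys j0) \<bullet> w" for z
  define q where "q z = l z * R z" for z
  have pR: "polyd (2 * card M) R"
    unfolding R_def[abs_def] s_def by (rule polyd_prod[OF finM]) (rule polyd_sq)
  have deg: "1 + 2 * card M \<le> 2 * D - 1" using cardM KD j0 by simp
  have pq: "polyd (1 + 2 * card M) q"
    unfolding q_def l_def by (rule polyd_mult[OF polyd_inner_lin pR])
  obtain \<gamma> where g: "\<forall>z. q z = Pc \<gamma> z" using polyd_coeffs[OF pq deg] by blast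
  obtain DR where DR: "\<And>z. (R has_derivative DR z) (at z)"
    using polyd_has_derivative[OF pR] deg by (metis add_leE)
  have l_der: "(l has_derivative (\<lambda>h. h \<bullet> w)) (at z)" for z
    unfolding l_def[abs_def] by (intro derivative_eq_intros) auto
  have q_der: "(q has_derivative (\<lambda>h. l z * DR z h + (h \<bullet> w) * R z)) (at z)" for z
    unfolding q_def[abs_def] by (rule has_derivative_mult[OF l_der DR])
  have Rzero: "R (ys m) = 0" if "m \<in> M" for m
    unfolding R_def using that finM by (auto simp: s_def intro!: bexI[of _ m])
  have DRzero: "DR (ys m) = (\<lambda>h. 0)" if "m \<in> M" for m
  proof -
    have eq: "R = (\<lambda>z. s m z * (\<Prod>m'\<in>M - {m}. s m' z))"
      unfolding R_def[abs_def] using that finM by (simp add: prod.remove)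
    have "polyd (2 * card (M - {m})) (\<lambda>z. \<Prod>m'\<in>M - {m}. s m' z)"
      unfolding s_def by (rule polyd_prod) (use finM polyd_sq in auto)
    moreover have "2 * card (M - {m}) \<le> 2 * D - 1"
      using deg finM that card_Diff1_le[of M m] by linarith
    ultimately obtain DR' where DR': "\<And>z. ((\<lambda>z. \<Prod>m'\<in>M - {m}. s m' z) has_derivative DR' z) (at z)"
      using polyd_has_derivative by metis
    have "(R has_derivative (\<lambda>h. s m (ys m) * DR' (ys m) h + 0 * (\<Prod>m'\<in>M - {m}. s m' (ys m)))) (at (ys m))"
      unfolding eq using has_derivative_mult[OF sq_deriv_zero[of "ys m", folded s_def] DR'] unfolding s_def
      by (simp add: s_def[abs_def])
    then have "(R has_derivative (\<lambda>h. 0)) (at (ys m))" by (simp add: s_def)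
    with DR[of "ys m"] show ?thesis using has_derivative_unique by metis
  qed
  have R_j0: "R (ys j0) \<noteq> 0"
  proof -
    have "s m (ys j0) \<noteq> 0" if "m \<in> M" for m
      using that dist[of j0 m] j0 by (auto simp: s_def M_def)
    then show ?thesis unfolding R_def using finM by simp
  qed
  show ?thesis
  proof (intro exI conjI allI impI)
    fix m assume m: "m < K"
    show "Pc \<gamma> (ys m) = 0"
    proof (cases "m = j0")
      case True then show ?thesis using spec[OF g, of "ys j0"] by (simp add: q_def l_def)
    next
      case False then have "m \<in> M" using m by (simp add: M_def)
      then show ?thesis using spec[OF g, of "ys m"] Rzero by (simp add: q_def)
    qed
  next
    fix m h assume m: "m < K" "m \<noteq> j0"
    then have mM: "m \<in> M" by (simp add: M_def)
    have "DPc \<gamma> (ys m) h = l (ys m) * DR (ys m) h + (h \<bullet> w) * R (ys m)"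
      using DPc_eq_deriv[OF q_der g] .
    then show "DPc \<gamma> (ys m) h = 0" using DRzero[OF mM] Rzero[OF mM] by simp
  next
    have "DPc \<gamma> (ys j0) w = l (ys j0) * DR (ys j0) w + (w \<bullet> w) * R (ys j0)"
      using DPc_eq_deriv[OF q_der g] .
    then show "DPc \<gamma> (ys j0) w \<noteq> 0" using R_j0 w by (simp add: l_def)
  qed
qed

lemma e1_i1[simp]: "e1 $ i1 = 1" by (simp add: e1_def)

lemma rank_vector:
  assumes diffeo: "Ck_diffeomorphism 3 (perturb i1 D \<phi> c)" and v: "v \<noteq> 0"
    and dist: "\<And>m m'. m < K \<Longrightarrow> m' < K \<Longrightarrow> m \<noteq> m' \<Longrightarrow> Orb c x m \<noteq> Orb c x m'"
    and KD: "K \<le> D" and j: "1 \<le> j" "j \<le> K"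
  shows "\<exists>\<gamma>. (\<forall>i<j. dW c x v \<gamma> 0 0 i $ i1 = 0) \<and> dW c x v \<gamma> 0 0 j $ i1 \<noteq> 0"
proof -
  define j0 where "j0 = j - 1"
  have j0K: "j0 < K" and jj: "j = Suc j0" using j by (auto simp: j0_def)
  have wne: "Wv c x v j0 \<noteq> 0" by (rule Wv_nonzero[OF diffeo v])
  obtain \<gamma> where g1: "\<forall>m<K. Pc \<gamma> (Orb c x m) = 0"
    and g2: "\<forall>m<K. m \<noteq> j0 \<longrightarrow> (\<forall>h. DPc \<gamma> (Orb c x m) h = 0)"
    and g3: "DPc \<gamma> (Orb c x j0) (Wv c x v j0) \<noteq> 0"
    using interp_poly[of K "Orb c x", OF dist j0K KD wne] by blast
  have dO0: "dO c x \<gamma> 0 m = 0" if "m \<le> K" for m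
    using that by (induction m) (auto simp: Df_zero g1)
  have dW0: "dW c x v \<gamma> 0 0 m = 0" if "m \<le> j0" for m
    using that
  proof (induction m)
    case 0 then show ?case by simp
  next
    case (Suc m)
    then have "m < K" "m \<noteq> j0" "m \<le> K" using j0K by auto
    then show ?case using Suc by (simp add: dO0 D2f_zero Df_zero g2)
  qed
  have "dW c x v \<gamma> 0 0 j = DPc \<gamma> (Orb c x j0) (Wv c x v j0) *\<^sub>R e1"
    using j0K by (simp add: jj dO0 dW0 D2f_zero Df_zero)
  then have "dW c x v \<gamma> 0 0 j $ i1 \<noteq> 0" using g3 by simp
  moreover have "\<forall>i<j. dW c x v \<gamma> 0 0 i $ i1 = 0" using dW0 jj by (auto simp: less_Suc_eq_le)
  ultimately show ?thesis by blast
qed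

end


lemma vec_expand: "(x::real^'k::finite) = (\<Sum>\<kappa>\<in>UNIV. (x $ \<kappa>) *\<^sub>R axis \<kappa> 1)"
  using basis_expansion[of x] by (simp add: scalar_mult_eq_scaleR)

lemma triangular_span:
  fixes u :: "nat \<Rightarrow> real^'k::finite" and \<iota> :: "'k \<Rightarrow> nat"
  assumes bij: "bij_betw \<iota> UNIV {1..K}"
    and low: "\<And>j \<kappa>. j \<in> {1..K} \<Longrightarrow> \<iota> \<kappa> < j \<Longrightarrow> u j $ \<kappa> = 0"
    and diag: "\<And>\<kappa>. u (\<iota> \<kappa>) $ \<kappa> \<noteq> 0"
  shows "span (u ` {1..K}) = UNIV"
proof -
  let ?U = "span (u ` {1..K})"
  have inj: "inj \<iota>" and rng: "\<And>\<kappa>. \<iota> \<kappa> \<in> {1..K}" using bij by (auto simp: bij_betw_def)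
  have ax: "axis \<kappa> 1 \<in> ?U" if "K - \<iota> \<kappa> = n" for n \<kappa>
    using that
  proof (induction n arbitrary: \<kappa> rule: less_induct)
    case (less n \<kappa>)
    define j where "j = \<iota> \<kappa>"
    have uj: "u j \<in> ?U" using rng by (auto simp: j_def intro: span_base)
    have rest: "(u j $ \<kappa>') *\<^sub>R axis \<kappa>' 1 \<in> ?U" if "\<kappa>' \<noteq> \<kappa>" for \<kappa>'
    proof (cases "\<iota> \<kappa>' < j")
      case True then show ?thesis using low[of j \<kappa>'] rng by (simp add: j_def span_zero)
    next
      case False
      then have "\<iota> \<kappa>' \<noteq> j" using inj that by (auto simp: j_def inj_def)
      with False have "\<iota> \<kappa>' > j" by simp
      then have "K - \<iota> \<kappa>' < n" using rng[of \<kappa>'] rng[of \<kappa>] less.prems by (auto simp: j_def)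
      then show ?thesis using less.IH by (auto intro: span_scale)
    qed
    have "u j = (\<Sum>\<kappa>'\<in>UNIV. (u j $ \<kappa>') *\<^sub>R axis \<kappa>' 1)" by (rule vec_expand)
    also have "\<dots> = (u j $ \<kappa>) *\<^sub>R axis \<kappa> 1 + (\<Sum>\<kappa>'\<in>UNIV - {\<kappa>}. (u j $ \<kappa>') *\<^sub>R axis \<kappa>' 1)"
      by (rule sum.remove) auto
    finally have "u j = (u j $ \<kappa>) *\<^sub>R axis \<kappa> 1 + (\<Sum>\<kappa>'\<in>UNIV - {\<kappa>}. (u j $ \<kappa>') *\<^sub>R axis \<kappa>' 1)" .
    then have "(u j $ \<kappa>) *\<^sub>R axis \<kappa> 1 = u j - (\<Sum>\<kappa>'\<in>UNIV - {\<kappa>}. (u j $ \<kappa>') *\<^sub>R axis \<kappa>' 1)"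
      by (simp add: algebra_simps)
    also have "\<dots> \<in> ?U" using uj rest by (intro span_diff span_sum) auto
    finally have "(u j $ \<kappa>) *\<^sub>R axis \<kappa> 1 \<in> ?U" .
    then have "(1 / u j $ \<kappa>) *\<^sub>R ((u j $ \<kappa>) *\<^sub>R axis \<kappa> 1) \<in> ?U" by (rule span_scale)
    then show ?case using diag[of \<kappa>] by (simp add: j_def)
  qed
  have "x \<in> ?U" for x
  proof -
    have "(\<Sum>\<kappa>\<in>UNIV. (x $ \<kappa>) *\<^sub>R axis \<kappa> 1) \<in> ?U"
      using ax by (intro span_sum span_scale) auto
    then show ?thesis by (subst vec_expand) 
  qed
  then show ?thesis by auto
qed

lemma choose_basis_subset:
  fixes L :: "'a \<Rightarrow> 'v::euclidean_space"
  assumes fin: "finite I" and sp: "span (L ` I) = UNIV"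
  shows "\<exists>B\<subseteq>I. card B = DIM('v) \<and> inj_on L B \<and> span (L ` B) = UNIV"
proof -
  obtain B' where B': "B' \<subseteq> L ` I" "independent B'" "L ` I \<subseteq> span B'" "card B' = dim (L ` I)"
    using basis_exists by blast
  have dimI: "dim (L ` I) = DIM('v)" using sp by (metis dim_UNIV dim_span)
  define B where "B = inv_into I L ` B'"
  have BI: "B \<subseteq> I" using B'(1) by (auto simp: B_def inv_into_into)
  have LB: "L ` B = B'" using B'(1) by (auto simp: B_def f_inv_into_f image_image) (metis f_inv_into_f image_eqI subsetD)
  have inj1: "inj_on (inv_into I L) B'" using B'(1) by (rule inj_on_inv_into)
  have cardB: "card B = card B'" unfolding B_def using inj1 by (rule card_image)
  have injL: "inj_on L B"
  proof (rule inj_onI)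
    fix a b assume "a \<in> B" "b \<in> B" "L a = L b"
    then obtain x y where xy: "x \<in> B'" "y \<in> B'" "a = inv_into I L x" "b = inv_into I L y"
      by (auto simp: B_def)
    then have "L a = x" "L b = y" using B'(1) by (auto simp: f_inv_into_f subset_eq)
    then show "a = b" using xy \<open>L a = L b\<close> by simp
  qed
  have "span B' = UNIV" using B'(3) sp by (metis span_eq_iff span_minimal subspace_span top.extremum_uniqueI)
  then show ?thesis using BI cardB injL LB B'(4) dimI by auto
qed

context pert
begin

definition Lv :: "(('d \<Rightarrow> nat) \<Rightarrow> real) \<Rightarrow> real^'d \<Rightarrow> real^'d \<Rightarrow> ('k::finite \<Rightarrow> nat) \<Rightarrow> (('d \<Rightarrow> nat) \<Rightarrow> real) \<Rightarrow> real^'k" where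
  "Lv c x v \<iota> \<gamma> = (\<chi> \<kappa>. dW c x v \<gamma> 0 0 (\<iota> \<kappa>) $ i1)"

lemma Lv_expand: "Lv c x v \<iota> \<gamma> = (\<Sum>\<alpha>\<in>mindex D. \<gamma> \<alpha> *\<^sub>R Lv c x v \<iota> (delta \<alpha>))"
  unfolding Lv_def by (subst dW_expand) (simp add: vec_eq_iff sum_component)

lemma span_Lv:
  fixes \<iota> :: "'k::finite \<Rightarrow> nat"
  assumes bij: "bij_betw \<iota> UNIV {1..CARD('k)}"
    and diffeo: "Ck_diffeomorphism 3 (perturb i1 D \<phi> c)" and v: "v \<noteq> 0"
    and dist: "\<And>m m'. m < CARD('k) \<Longrightarrow> m' < CARD('k) \<Longrightarrow> m \<noteq> m' \<Longrightarrow> Orb c x m \<noteq> Orb c x m'"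
    and KD: "CARD('k) \<le> D"
  shows "span ((\<lambda>\<alpha>. Lv c x v \<iota> (delta \<alpha>)) ` mindex D) = UNIV"
proof -
  let ?K = "CARD('k)"
  have "\<forall>j\<in>{1..?K}. \<exists>\<gamma>. (\<forall>i<j. dW c x v \<gamma> 0 0 i $ i1 = 0) \<and> dW c x v \<gamma> 0 0 j $ i1 \<noteq> 0"
    using rank_vector[OF diffeo v dist KD] by auto
  then obtain \<Gamma> where G: "\<And>j. j \<in> {1..?K} \<Longrightarrow> (\<forall>i<j. dW c x v (\<Gamma> j) 0 0 i $ i1 = 0) \<and> dW c x v (\<Gamma> j) 0 0 j $ i1 \<noteq> 0"
    by metis
  define u where "u j = Lv c x v \<iota> (\<Gamma> j)" for j
  have rng: "\<iota> \<kappa> \<in> {1..?K}" for \<kappa> using bij by (auto simp: bij_betw_def)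
  have "span (u ` {1..?K}) = UNIV"
  proof (rule triangular_span[OF bij])
    fix j \<kappa> assume "j \<in> {1..?K}" "\<iota> \<kappa> < j"
    then show "u j $ \<kappa> = 0" using G by (simp add: u_def Lv_def)
  next
    fix \<kappa> show "u (\<iota> \<kappa>) $ \<kappa> \<noteq> 0" using G[OF rng[of \<kappa>]] by (simp add: u_def Lv_def)
  qed
  moreover have "u ` {1..?K} \<subseteq> span ((\<lambda>\<alpha>. Lv c x v \<iota> (delta \<alpha>)) ` mindex D)"
  proof
    fix y assume "y \<in> u ` {1..?K}"
    then obtain j where "y = u j" by auto
    then have "y = (\<Sum>\<alpha>\<in>mindex D. \<Gamma> j \<alpha> *\<^sub>R Lv c x v \<iota> (delta \<alpha>))" by (simp add: u_def Lv_expand[of _ _ _ _ "\<Gamma> j"])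
    then show "y \<in> span ((\<lambda>\<alpha>. Lv c x v \<iota> (delta \<alpha>)) ` mindex D)"
      by (simp only:) (rule span_sum, rule span_scale, rule span_base, rule imageI)
  qed
  ultimately show ?thesis by (metis span_minimal subspace_span top.extremum_uniqueI)
qed

definition gam :: "('k \<Rightarrow> ('d \<Rightarrow> nat)) \<Rightarrow> real^'k::finite \<Rightarrow> ('d \<Rightarrow> nat) \<Rightarrow> real" where
  "gam \<sigma> u = (\<lambda>\<alpha>. if \<alpha> \<in> range \<sigma> then u $ (inv \<sigma> \<alpha>) else 0)"

definition dB where "dB c x v \<iota> \<sigma> u = Lv c x v \<iota> (gam \<sigma> u)"

lemma gam_lin: "gam \<sigma> (a *\<^sub>R u1 + b *\<^sub>R u2) = (\<lambda>\<alpha>. a * gam \<sigma> u1 \<alpha> + b * gam \<sigma> u2 \<alpha>)"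
  by (auto simp: gam_def)

lemma dB_linear:
  fixes \<sigma> :: "'k::finite \<Rightarrow> ('d \<Rightarrow> nat)" and \<iota> :: "'k \<Rightarrow> nat"
  shows "linear (dB c x v \<iota> \<sigma>)"
proof (rule linearI)
  fix u1 u2 :: "real^'k"
  show "dB c x v \<iota> \<sigma> (u1 + u2) = dB c x v \<iota> \<sigma> u1 + dB c x v \<iota> \<sigma> u2"
    using dW_lin[of c x v 1 "gam \<sigma> u1" 1 "gam \<sigma> u2" 0 0 0 0] gam_lin[of \<sigma> 1 u1 1 u2]
    by (simp add: dB_def Lv_def vec_eq_iff)
next
  fix r and u :: "real^'k"
  show "dB c x v \<iota> \<sigma> (r *\<^sub>R u) = r *\<^sub>R dB c x v \<iota> \<sigma> u"
    using dW_lin[of c x v r "gam \<sigma> u" 0 "gam \<sigma> u" 0 0 0 0] gam_lin[of \<sigma> r u 0 u]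
    by (simp add: dB_def Lv_def vec_eq_iff)
qed

lemma gam_axis: "inj \<sigma> \<Longrightarrow> gam \<sigma> (axis \<kappa> 1) = delta (\<sigma> \<kappa>)"
  by (rule ext) (auto simp: gam_def delta_def axis_def inv_f_f)

lemma dB_inj:
  fixes \<iota> :: "'k::finite \<Rightarrow> nat"
  assumes inj: "inj \<sigma>" and sp: "span ((\<lambda>\<alpha>. Lv c x v \<iota> (delta \<alpha>)) ` range \<sigma>) = UNIV"
  shows "inj (dB c x v \<iota> (\<sigma>::'k::finite \<Rightarrow> _))"
proof -
  have lin: "linear (dB c x v \<iota> \<sigma>)" by (rule dB_linear)
  have "(\<lambda>\<alpha>. Lv c x v \<iota> (delta \<alpha>)) ` range \<sigma> \<subseteq> range (dB c x v \<iota> \<sigma>)"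
  proof
    fix y assume "y \<in> (\<lambda>\<alpha>. Lv c x v \<iota> (delta \<alpha>)) ` range \<sigma>"
    then obtain \<kappa> where "y = Lv c x v \<iota> (delta (\<sigma> \<kappa>))" by auto
    then have "y = dB c x v \<iota> \<sigma> (axis \<kappa> 1)" by (simp add: dB_def gam_axis[OF inj])
    then show "y \<in> range (dB c x v \<iota> \<sigma>)" by auto
  qed
  moreover have "subspace (range (dB c x v \<iota> \<sigma>))"
    using lin by (metis linear_subspace_image subspace_UNIV)
  ultimately have "surj (dB c x v \<iota> \<sigma>)" using sp by (metis span_minimal top.extremum_uniqueI)
  then show ?thesis using lin linear_surjective_imp_injective by blast
qed

lemma exists_sigma:
  fixes \<iota> :: "'k::finite \<Rightarrow> nat"
  assumes bij: "bij_betw \<iota> UNIV {1..CARD('k)}"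
    and diffeo: "Ck_diffeomorphism 3 (perturb i1 D \<phi> c)" and v: "v \<noteq> 0"
    and dist: "\<And>m m'. m < CARD('k) \<Longrightarrow> m' < CARD('k) \<Longrightarrow> m \<noteq> m' \<Longrightarrow> Orb c x m \<noteq> Orb c x m'"
    and KD: "CARD('k) \<le> D"
  shows "\<exists>\<sigma>::'k \<Rightarrow> ('d \<Rightarrow> nat). inj \<sigma> \<and> range \<sigma> \<subseteq> mindex D \<and> inj (dB c x v \<iota> \<sigma>)"
proof -
  obtain B where B: "B \<subseteq> mindex D" "card B = DIM(real^'k)"
      "inj_on (\<lambda>\<alpha>. Lv c x v \<iota> (delta \<alpha>)) B" "span ((\<lambda>\<alpha>. Lv c x v \<iota> (delta \<alpha>)) ` B) = UNIV"
    using choose_basis_subset[OF finite_mindex span_Lv[OF bij diffeo v dist KD]] by blast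
  have "finite B" using B(1) finite_mindex finite_subset by blast
  then have "card (UNIV::'k set) = card B" using B(2) by simp
  then obtain \<sigma> where s: "bij_betw \<sigma> (UNIV::'k set) B"
    using \<open>finite B\<close> finite_same_card_bij[of "UNIV::'k set" B] by auto
  then have "inj \<sigma>" "range \<sigma> = B" by (auto simp: bij_betw_def)
  then show ?thesis using dB_inj[of \<sigma> c x v \<iota>] B by auto
qed

end


lemma vd_shift:
  fixes h :: "'a::real_normed_vector" and F :: "'a \<Rightarrow> 'b::real_normed_vector"
  assumes "((\<lambda>s. F (q + s *\<^sub>R h)) has_vector_derivative G) (at 0)" and that: "q = p + t *\<^sub>R h"
  shows "((\<lambda>s. F (p + s *\<^sub>R h)) has_vector_derivative G) (at t)"
proof -
  have 1: "((\<lambda>s. s - t) has_vector_derivative 1) (at t)"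
    using has_vector_derivative_diff[OF has_vector_derivative_id has_vector_derivative_const[of t]] by (simp add: id_def)
  have "((\<lambda>s. F (q + s *\<^sub>R h)) \<circ> (\<lambda>s. s - t) has_vector_derivative 1 *\<^sub>R G) (at t)"
    using vector_diff_chain_at[OF 1] assms by simp
  moreover have "\<And>x. q + (x - t) *\<^sub>R h = p + x *\<^sub>R h"
  proof -
    fix x
    have "t *\<^sub>R h + (x - t) *\<^sub>R h = x *\<^sub>R h" using scaleR_left_distrib[of t "x - t" h] by simp
    then show "q + (x - t) *\<^sub>R h = p + x *\<^sub>R h" using that by (simp add: add.assoc)
  qed
  then have "(\<lambda>s. F (q + s *\<^sub>R h)) \<circ> (\<lambda>s. s - t) = (\<lambda>s. F (p + s *\<^sub>R h))"
    by (auto simp: o_def)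
  ultimately show ?thesis by simp
qed

lemma lin_expand:
  fixes f :: "'a::euclidean_space \<Rightarrow> 'b::real_vector"
  assumes "linear f"
  shows "f h = (\<Sum>b\<in>Basis. (h \<bullet> b) *\<^sub>R f b)"
proof -
  have "f h = f (\<Sum>b\<in>Basis. (h \<bullet> b) *\<^sub>R b)" by (simp add: euclidean_representation)
  also have "\<dots> = (\<Sum>b\<in>Basis. (h \<bullet> b) *\<^sub>R f b)" using assms by (simp add: linear_sum linear_scale)
  finally show ?thesis .
qed

lemma uniform_cont_deriv:
  fixes DF :: "'a::euclidean_space \<Rightarrow> 'a \<Rightarrow> 'b::real_normed_vector"
  assumes lin: "\<And>p. linear (DF p)" and cont: "\<And>h. continuous_on UNIV (\<lambda>p. DF p h)" and e: "e > 0"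
  shows "\<exists>r>0. \<forall>p\<in>ball p0 r. \<forall>h. norm (DF p h - DF p0 h) \<le> e * norm h"
proof -
  define N where "N = real (card (Basis::'a set))"
  have N: "N > 0" by (simp add: N_def)
  have "\<forall>\<^sub>F p in at p0. \<forall>b\<in>Basis. dist (DF p b) (DF p0 b) < e / N"
  proof (rule eventually_ball_finite)
    show "finite (Basis::'a set)" by simp
    show "\<forall>b\<in>Basis. \<forall>\<^sub>F p in at p0. dist (DF p b) (DF p0 b) < e / N"
    proof
    fix b :: 'a
    have "isCont (\<lambda>p. DF p b) p0" using cont[of b] by (simp add: continuous_on_eq_continuous_at)
    then have "((\<lambda>p. DF p b) \<longlongrightarrow> DF p0 b) (at p0)" by (simp add: isCont_def)
    then show "\<forall>\<^sub>F p in at p0. dist (DF p b) (DF p0 b) < e / N"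
      using N e by (auto simp: tendsto_iff)
    qed
  qed
  then obtain r where r: "r > 0" "\<And>p. p \<noteq> p0 \<Longrightarrow> dist p p0 < r \<Longrightarrow> \<forall>b\<in>Basis. dist (DF p b) (DF p0 b) < e / N"
    by (auto simp: eventually_at)
  have est: "norm (DF p h - DF p0 h) \<le> e * norm h" if "p \<in> ball p0 r" for p h
  proof (cases "p = p0")
    case True then show ?thesis using e by simp
  next
    case False
    have "dist p p0 < r" using \<open>p \<in> ball p0 r\<close> by (simp add: dist_commute)
    then have bb: "norm (DF p b - DF p0 b) \<le> e / N" if "b \<in> Basis" for b
      using r(2)[OF False] that by (simp add: dist_norm less_imp_le)
    have "DF p h - DF p0 h = (\<Sum>b\<in>Basis. (h \<bullet> b) *\<^sub>R (DF p b - DF p0 b))"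
    proof -
      have "DF p h = (\<Sum>b\<in>Basis. (h \<bullet> b) *\<^sub>R DF p b)"
        by (rule lin_expand[OF lin])
      moreover have "DF p0 h = (\<Sum>b\<in>Basis. (h \<bullet> b) *\<^sub>R DF p0 b)"
        by (rule lin_expand[OF lin])
      ultimately show ?thesis by (simp add: sum_subtractf scaleR_diff_right)
    qed
    also have "norm \<dots> \<le> (\<Sum>b\<in>Basis. norm ((h \<bullet> b) *\<^sub>R (DF p b - DF p0 b)))" by (rule norm_sum)
    also have "\<dots> \<le> (\<Sum>b\<in>(Basis::'a set). norm h * (e / N))"
    proof (rule sum_mono)
      fix b :: 'a assume b: "b \<in> Basis"
      have "\<bar>h \<bullet> b\<bar> \<le> norm h" using b by (simp add: Basis_le_norm)
      then have "\<bar>h \<bullet> b\<bar> * norm (DF p b - DF p0 b) \<le> norm h * (e / N)"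
        using bb[OF b] by (intro mult_mono) auto
      then show "norm ((h \<bullet> b) *\<^sub>R (DF p b - DF p0 b)) \<le> norm h * (e / N)"
        by simp
    qed
    also have "\<dots> = e * norm h" using N by (simp add: N_def)
    finally show ?thesis .
  qed
  then show ?thesis using r(1) by blast
qed


lemma lipschitz_lowdim_negligible:
  fixes g :: "'m::euclidean_space \<Rightarrow> 'k::euclidean_space"
  assumes dim: "DIM('m) < DIM('k)" and L: "\<And>y1 y2. y1 \<in> S \<Longrightarrow> y2 \<in> S \<Longrightarrow> norm (g y1 - g y2) \<le> L * norm (y1 - y2)"
  shows "negligible (g ` S)"
proof -
  define S' where "S' = (\<lambda>y. (y, 0::real)) ` S"
  define g' where "g' z = g (fst z)" for z :: "'m \<times> real"
  have "S' \<subseteq> {z. (0::'m, 1::real) \<bullet> z = 0}" by (auto simp: S'_def)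
  moreover have "negligible {z. (0::'m, 1::real) \<bullet> z = 0}" by (rule negligible_hyperplane) (simp add: zero_prod_def)
  ultimately have negS': "negligible S'" using negligible_subset by blast
  have "negligible (g' ` S')"
  proof (rule negligible_locally_Lipschitz_image[OF _ negS'])
    show "DIM('m \<times> real) \<le> DIM('k)" using dim by simp
    fix z assume z: "z \<in> S'"
    show "\<exists>T B. open T \<and> z \<in> T \<and> (\<forall>y\<in>S' \<inter> T. norm (g' y - g' z) \<le> B * norm (y - z))"
    proof (intro exI conjI ballI)
      show "open (UNIV :: ('m \<times> real) set)" by simp
      show "z \<in> UNIV" by simp
      fix y assume "y \<in> S' \<inter> UNIV"
      then obtain y1 z1 where "y = (y1, 0)" "z = (z1, 0)" "y1 \<in> S" "z1 \<in> S" using z by (auto simp: S'_def)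
      then show "norm (g' y - g' z) \<le> L * norm (y - z)" using L by (simp add: g'_def)
    qed
  qed
  moreover have "g' ` S' = g ` S" by (auto simp: S'_def g'_def image_image)
  ultimately show ?thesis by simp
qed

lemma sard_lite:
  fixes F :: "'k::euclidean_space \<times> 'm::euclidean_space \<Rightarrow> 'k"
    and DF :: "'k \<times> 'm \<Rightarrow> 'k \<times> 'm \<Rightarrow> 'k"
  assumes dim: "DIM('m) < DIM('k)"
    and der: "\<And>p h. ((\<lambda>s. F (p + s *\<^sub>R h)) has_vector_derivative DF p h) (at 0)"
    and lin: "\<And>p. linear (DF p)"
    and cont: "\<And>h. continuous_on UNIV (\<lambda>p. DF p h)"
  shows "negligible {b. \<exists>y. F (b,y) = 0 \<and> inj (\<lambda>u. DF (b,y) (u,0))}"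
proof -
  define Z where "Z = {p. F p = 0 \<and> inj (\<lambda>u. DF p (u,0))}"
  have tgt: "{b. \<exists>y. F (b,y) = 0 \<and> inj (\<lambda>u. DF (b,y) (u,0))} = fst ` Z"
    by (auto simp: Z_def image_iff)
  have local: "\<exists>r>0. negligible (fst ` (Z \<inter> ball p0 r))" if p0: "p0 \<in> Z" for p0
  proof -
    define A where "A u = DF p0 (u, 0)" for u
    have linA: "linear A"
    proof (rule linearI)
      fix u1 u2 show "A (u1 + u2) = A u1 + A u2"
        using linear_add[OF lin[of p0], of "(u1,0)" "(u2,0)"] by (simp add: A_def)
    next
      fix a u show "A (a *\<^sub>R u) = a *\<^sub>R A u"
        using linear_scale[OF lin[of p0], of a "(u,0)"] by (simp add: A_def)
    qed
    have injA: "inj A" using p0 by (simp add: Z_def A_def[abs_def])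
    obtain \<kappa> where ka: "\<kappa> > 0" "\<And>u. \<kappa> * norm u \<le> norm (A u)"
      using linear_inj_bounded_below_pos[OF linA injA] by blast
    have linC: "linear (\<lambda>y. DF p0 (0, y))"
    proof (rule linearI)
      fix u1 u2 show "DF p0 (0, u1 + u2) = DF p0 (0, u1) + DF p0 (0, u2)"
        using linear_add[OF lin[of p0], of "(0,u1)" "(0,u2)"] by simp
    next
      fix a u show "DF p0 (0, a *\<^sub>R u) = a *\<^sub>R DF p0 (0, u)"
        using linear_scale[OF lin[of p0], of a "(0,u)"] by simp
    qed
    obtain C where C: "C > 0" "\<And>y. norm (DF p0 (0, y)) \<le> C * norm y"
      using linear_bounded_pos[OF linC] by blast
    define \<epsilon> where "\<epsilon> = \<kappa> / 4"
    have eps: "\<epsilon> > 0" using ka by (simp add: \<epsilon>_def)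
    obtain r where r: "r > 0" "\<And>p h. p \<in> ball p0 r \<Longrightarrow> norm (DF p h - DF p0 h) \<le> \<epsilon> * norm h"
      using uniform_cont_deriv[OF lin cont eps, of p0] by blast
    have mvt: "norm (F p2 - F p1 - DF p0 (p2 - p1)) \<le> 3 * \<epsilon> * norm (p2 - p1)"
      if p12: "p1 \<in> ball p0 r" "p2 \<in> ball p0 r" for p1 p2
    proof -
      define h where "h = p2 - p1"
      have inb: "p1 + s *\<^sub>R h \<in> ball p0 r" if "s \<in> {0..1}" for s
      proof -
        have "(1 - s) *\<^sub>R p1 + s *\<^sub>R p2 \<in> ball p0 r"
          using convex_ball[of p0 r, unfolded convex_alt] p12 that by auto
        moreover have "(1 - s) *\<^sub>R p1 + s *\<^sub>R p2 = p1 + s *\<^sub>R h"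
          by (simp add: h_def algebra_simps)
        ultimately show ?thesis by simp
      qed
      have d: "((\<lambda>s. F (p1 + s *\<^sub>R h)) has_vector_derivative DF (p1 + s *\<^sub>R h) h) (at s within {0..1})" for s
        by (rule has_vector_derivative_at_within, rule vd_shift[OF der refl])
      have B: "norm (DF (p1 + s *\<^sub>R h) h - DF (p1 + 0 *\<^sub>R h) h) \<le> 2 * \<epsilon> * norm h" if "s \<in> {0..1}" for s
      proof -
        have "norm (DF (p1 + s *\<^sub>R h) h - DF p0 h) \<le> \<epsilon> * norm h" using r(2)[OF inb[OF that]] .
        moreover have "norm (DF p1 h - DF p0 h) \<le> \<epsilon> * norm h" using r(2)[OF p12(1)] .
        ultimately show ?thesis using norm_triangle_ineq4[of "DF (p1 + s *\<^sub>R h) h - DF p0 h" "DF p1 h - DF p0 h"]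
          by simp
      qed
      have "norm ((\<lambda>s. F (p1 + s *\<^sub>R h)) 1 - (\<lambda>s. F (p1 + s *\<^sub>R h)) 0 - (1 - 0) *\<^sub>R DF (p1 + 0 *\<^sub>R h) h)
            \<le> norm (1 - 0::real) * (2 * \<epsilon> * norm h)"
        by (rule vector_differentiable_bound_linearization[OF d _ B]) (auto simp: closed_segment_eq_real_ivl)
      then have 1: "norm (F p2 - F p1 - DF p1 h) \<le> 2 * \<epsilon> * norm h" by (simp add: h_def)
      have 2: "norm (DF p1 h - DF p0 h) \<le> \<epsilon> * norm h" using r(2)[OF p12(1)] .
      have "norm (F p2 - F p1 - DF p0 h) \<le> norm (F p2 - F p1 - DF p1 h) + norm (DF p1 h - DF p0 h)"
        using norm_triangle_ineq[of "F p2 - F p1 - DF p1 h" "DF p1 h - DF p0 h"] by simp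
      then show ?thesis using 1 2 by (simp add: h_def)
    qed
    define L where "L = (3 * \<kappa> + 4 * C) / \<kappa>"
    have lip: "norm (fst p2 - fst p1) \<le> L * norm (snd p2 - snd p1)"
      if p12: "p1 \<in> Z \<inter> ball p0 r" "p2 \<in> Z \<inter> ball p0 r" for p1 p2
    proof -
      obtain b1 y1 b2 y2 where pp: "p1 = (b1, y1)" "p2 = (b2, y2)" by (cases p1, cases p2)
      have F0: "F p1 = 0" "F p2 = 0" using p12 by (auto simp: Z_def)
      have m: "norm (DF p0 (p2 - p1)) \<le> 3 * \<epsilon> * norm (p2 - p1)" using mvt[of p1 p2] p12 F0 by simp
      have split: "DF p0 (p2 - p1) = A (b2 - b1) + DF p0 (0, y2 - y1)"
        using linear_add[OF lin[of p0], of "(b2 - b1, 0)" "(0, y2 - y1)"] by (simp add: pp A_def)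
      have "\<kappa> * norm (b2 - b1) \<le> norm (A (b2 - b1))" by (rule ka(2))
      also have "\<dots> \<le> norm (DF p0 (p2 - p1)) + norm (DF p0 (0, y2 - y1))"
        using split norm_triangle_ineq4[of "DF p0 (p2 - p1)" "DF p0 (0, y2 - y1)"] by (simp add: algebra_simps)
      also have "\<dots> \<le> 3 * \<epsilon> * (norm (b2 - b1) + norm (y2 - y1)) + C * norm (y2 - y1)"
      proof -
        have "norm (p2 - p1) \<le> norm (b2 - b1) + norm (y2 - y1)" using norm_Pair_le by (simp add: pp)
        then have "3 * \<epsilon> * norm (p2 - p1) \<le> 3 * \<epsilon> * (norm (b2 - b1) + norm (y2 - y1))"
          using eps by simp
        then show ?thesis using m C(2)[of "y2 - y1"] by linarith
      qed
      finally have "\<kappa> * norm (b2 - b1) \<le> 3 * \<epsilon> * (norm (b2 - b1) + norm (y2 - y1)) + C * norm (y2 - y1)" .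
      moreover have "3 * \<epsilon> * (norm (b2 - b1) + norm (y2 - y1)) = (3/4) * (\<kappa> * norm (b2 - b1)) + (3/4) * (\<kappa> * norm (y2 - y1))"
        by (simp add: \<epsilon>_def algebra_simps)
      moreover have "(3 * \<kappa> + 4 * C) * norm (y2 - y1) = 3 * (\<kappa> * norm (y2 - y1)) + 4 * (C * norm (y2 - y1))"
        by (simp add: algebra_simps)
      ultimately have "\<kappa> * norm (b2 - b1) \<le> (3 * \<kappa> + 4 * C) * norm (y2 - y1)"
        by linarith
      then have "norm (b2 - b1) \<le> (3 * \<kappa> + 4 * C) * norm (y2 - y1) / \<kappa>"
        using ka(1) by (simp add: field_simps)
      then show ?thesis by (simp add: pp L_def)
    qed
    define W where "W = Z \<inter> ball p0 r"
    define g where "g y = fst (SOME p. p \<in> W \<and> snd p = y)" for y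
    have gW: "g (snd p) = fst p" if "p \<in> W" for p
    proof -
      have ex: "\<exists>p'. p' \<in> W \<and> snd p' = snd p" using that by blast
      define p' where "p' = (SOME p'. p' \<in> W \<and> snd p' = snd p)"
      have p': "p' \<in> W" "snd p' = snd p" using someI_ex[OF ex] by (auto simp: p'_def)
      have "norm (fst p - fst p') \<le> L * norm (snd p - snd p')" using lip[of p' p] p' that by (simp add: W_def)
      then have "fst p = fst p'" using p' by simp
      then show ?thesis by (simp add: g_def p'_def)
    qed
    have "fst ` W = g ` (snd ` W)"
    proof
      show "fst ` W \<subseteq> g ` snd ` W"
      proof
        fix b assume "b \<in> fst ` W"
        then obtain p where "p \<in> W" "b = fst p" by auto
        then show "b \<in> g ` snd ` W" using gW by (metis image_eqI)
      qed
      show "g ` snd ` W \<subseteq> fst ` W" using gW by auto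
    qed
    moreover have "negligible (g ` (snd ` W))"
    proof (rule lipschitz_lowdim_negligible[OF dim])
      fix y1 y2 assume "y1 \<in> snd ` W" "y2 \<in> snd ` W"
      then obtain p1 p2 where "p1 \<in> W" "p2 \<in> W" "y1 = snd p1" "y2 = snd p2" by auto
      then show "norm (g y1 - g y2) \<le> L * norm (y1 - y2)"
        using lip[of p2 p1] gW by (simp add: W_def)
    qed
    ultimately show ?thesis using r(1) by (auto simp: W_def)
  qed
  then obtain r where r: "\<And>p0. p0 \<in> Z \<Longrightarrow> r p0 > 0 \<and> negligible (fst ` (Z \<inter> ball p0 (r p0)))"
    by metis
  define \<F> where "\<F> = (\<lambda>p0. ball p0 (r p0)) ` Z"
  obtain \<F>' where F': "\<F>' \<subseteq> \<F>" "countable \<F>'" "\<Union>\<F>' = \<Union>\<F>"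
    using Lindelof[of \<F>] by (auto simp: \<F>_def)
  have "Z \<subseteq> \<Union>\<F>" using r by (auto simp: \<F>_def)
  then have "fst ` Z = \<Union>((\<lambda>U. fst ` (Z \<inter> U)) ` \<F>')" using F'(3) by blast
  moreover have "negligible (\<Union>((\<lambda>U. fst ` (Z \<inter> U)) ` \<F>'))"
  proof (rule negligible_countable_Union)
    show "countable ((\<lambda>U. fst ` (Z \<inter> U)) ` \<F>')" using F'(2) by simp
    fix S assume "S \<in> (\<lambda>U. fst ` (Z \<inter> U)) ` \<F>'"
    then obtain p0 where "p0 \<in> Z" "S = fst ` (Z \<inter> ball p0 (r p0))" using F'(1) by (auto simp: \<F>_def)
    then show "negligible S" using r by simp
  qed
  ultimately show ?thesis using tgt by simp
qed


lemma vd_vec: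
  fixes f :: "real \<Rightarrow> real^'k::finite"
  assumes "\<And>\<kappa>. ((\<lambda>s. f s $ \<kappa>) has_vector_derivative f' $ \<kappa>) (at t)"
  shows "(f has_vector_derivative f') (at t)"
  unfolding has_vector_derivative_def
proof (subst has_derivative_componentwise_within, intro ballI)
  fix i :: "real^'k" assume "i \<in> Basis"
  then obtain \<kappa> where i: "i = axis \<kappa> 1" by (auto simp: Basis_vec_def)
  have "((\<lambda>s. f s $ \<kappa>) has_derivative (\<lambda>x. x *\<^sub>R f' $ \<kappa>)) (at t)"
    using assms[of \<kappa>] by (simp add: has_vector_derivative_def)
  then show "((\<lambda>x. f x \<bullet> i) has_derivative (\<lambda>x. (x *\<^sub>R f') \<bullet> i)) (at t)"
    by (simp add: i cart_eq_inner_axis[symmetric])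
qed

definition Tm :: "('k::finite \<Rightarrow> 'a) \<Rightarrow> real^'k \<Rightarrow> 'a \<Rightarrow> real" where
  "Tm \<sigma> b = (\<lambda>\<alpha>. if \<alpha> \<in> range \<sigma> then b $ (inv \<sigma> \<alpha>) else undefined)"

lemma Tm_restrict: "Tm \<sigma> b = (\<lambda>\<alpha>\<in>range \<sigma>. b $ (inv \<sigma> \<alpha>))"
  by (simp add: Tm_def restrict_def)

lemma Tm_measurable: "Tm \<sigma> \<in> measurable lborel (PiM (range \<sigma>) (\<lambda>_. lborel))"
  unfolding Tm_restrict by (intro measurable_restrict) simp

interpretation lb: product_sigma_finite "\<lambda>_::'a. lborel :: real measure"
  by standard

lemma distr_Tm:
  fixes \<sigma> :: "'k::finite \<Rightarrow> 'a"
  assumes inj: "inj \<sigma>"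
  shows "distr lborel (PiM (range \<sigma>) (\<lambda>_. lborel)) (Tm \<sigma>) = PiM (range \<sigma>) (\<lambda>_. lborel)"
proof (rule lb.PiM_eqI)
  show "finite (range \<sigma>)" by simp
  show "sets (distr lborel (PiM (range \<sigma>) (\<lambda>_. lborel)) (Tm \<sigma>)) = sets (PiM (range \<sigma>) (\<lambda>_. lborel))" by simp
  fix A assume A: "\<And>i. i \<in> range \<sigma> \<Longrightarrow> A i \<in> sets (lborel::real measure)"
  have Ab: "A (\<sigma> \<kappa>) \<in> sets borel" for \<kappa> using A[of "\<sigma> \<kappa>"] by simp
  define ax where "ax \<kappa> = (axis \<kappa> 1 :: real^'k)" for \<kappa>
  have injax: "inj ax" by (auto simp: ax_def inj_def axis_eq_axis)
  have Bv: "(Basis :: (real^'k) set) = range ax" by (auto simp: Basis_vec_def ax_def)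
  define f :: "real^'k \<Rightarrow> real \<Rightarrow> ennreal" where "f b = indicator (A (\<sigma> (inv ax b)))" for b
  have fax: "f (ax \<kappa>) = indicator (A (\<sigma> \<kappa>))" for \<kappa> by (simp add: f_def inv_f_f[OF injax])
  have pre: "Tm \<sigma> -` Pi\<^sub>E (range \<sigma>) A = {x. \<forall>\<kappa>. x $ \<kappa> \<in> A (\<sigma> \<kappa>)}"
    by (auto simp: Tm_def PiE_def Pi_def extensional_def inv_f_f[OF inj]) (metis inj inv_f_f rangeI)
  have "emeasure (distr lborel (PiM (range \<sigma>) (\<lambda>_. lborel)) (Tm \<sigma>)) (Pi\<^sub>E (range \<sigma>) A)
        = emeasure lborel {x. \<forall>\<kappa>. x $ \<kappa> \<in> A (\<sigma> \<kappa>)}"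
    by (subst emeasure_distr[OF Tm_measurable]) (auto simp: pre intro!: sets_PiM_I_finite A)
  also have "\<dots> = (\<integral>\<^sup>+x. (\<Prod>b\<in>Basis. f b (x \<bullet> b)) \<partial>lborel)"
  proof -
    have "(\<lambda>x. \<Prod>b\<in>Basis. f b (x \<bullet> b)) = indicator {x. \<forall>\<kappa>. x $ \<kappa> \<in> A (\<sigma> \<kappa>)}"
    proof
      fix x :: "real^'k"
      have "(\<Prod>b\<in>Basis. f b (x \<bullet> b)) = (\<Prod>\<kappa>\<in>UNIV. f (ax \<kappa>) (x \<bullet> ax \<kappa>))"
        unfolding Bv by (rule prod.reindex[OF injax[THEN inj_on_subset], simplified])
      also have "\<dots> = (\<Prod>\<kappa>\<in>UNIV. indicator (A (\<sigma> \<kappa>)) (x $ \<kappa>))"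
        by (simp add: fax, simp add: ax_def cart_eq_inner_axis[symmetric])
      also have "\<dots> = indicator {x. \<forall>\<kappa>. x $ \<kappa> \<in> A (\<sigma> \<kappa>)} x"
        by (auto simp: indicator_def prod_zero_iff)
      finally show "(\<Prod>b\<in>Basis. f b (x \<bullet> b)) = indicator {x. \<forall>\<kappa>. x $ \<kappa> \<in> A (\<sigma> \<kappa>)} x" .
    qed
    moreover have "{x::real^'k. \<forall>\<kappa>. x $ \<kappa> \<in> A (\<sigma> \<kappa>)} \<in> sets lborel"
    proof -
      have "{x::real^'k. \<forall>\<kappa>. x $ \<kappa> \<in> A (\<sigma> \<kappa>)} = (\<Inter>\<kappa>. (\<lambda>x. x $ \<kappa>) -` A (\<sigma> \<kappa>) \<inter> space lborel)" by auto
      also have "\<dots> \<in> sets lborel" using Ab by measurable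
      finally show ?thesis .
    qed
    ultimately show ?thesis by (simp add: nn_integral_indicator)
  qed
  also have "\<dots> = (\<Prod>b\<in>Basis. (\<integral>\<^sup>+x. f b x \<partial>lborel))"
    by (rule nn_integral_lborel_prod) (auto simp: Bv fax intro!: borel_measurable_indicator Ab)
  also have "\<dots> = (\<Prod>\<kappa>\<in>UNIV. emeasure lborel (A (\<sigma> \<kappa>)))"
    unfolding Bv using Ab
    by (subst prod.reindex[OF injax[THEN inj_on_subset], simplified]) (auto simp: fax)
  also have "\<dots> = (\<Prod>\<alpha>\<in>range \<sigma>. emeasure lborel (A \<alpha>))"
    by (rule prod.reindex[OF inj[THEN inj_on_subset], simplified, symmetric])
  finally show "emeasure (distr lborel (PiM (range \<sigma>) (\<lambda>_. lborel)) (Tm \<sigma>)) (Pi\<^sub>E (range \<sigma>) A)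
        = (\<Prod>\<alpha>\<in>range \<sigma>. emeasure lborel (A \<alpha>))" .
qed

lemma null_by_fibers:
  fixes I B :: "'a set"
  assumes fin: "finite I" and BI: "B \<subseteq> I" and E: "E \<in> sets (PiM I (\<lambda>_. lborel::real measure))"
    and fib: "\<And>cA. cA \<in> space (PiM (I - B) (\<lambda>_. lborel)) \<Longrightarrow>
       emeasure (PiM B (\<lambda>_. lborel)) {cB \<in> space (PiM B (\<lambda>_. lborel)). merge (I - B) B (cA, cB) \<in> E} = 0"
  shows "emeasure (PiM I (\<lambda>_. lborel::real measure)) E = 0"
proof -
  let ?M1 = "PiM (I - B) (\<lambda>_. lborel::real measure)" and ?M2 = "PiM B (\<lambda>_. lborel::real measure)"
  have IU: "I = (I - B) \<union> B" using BI by auto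
  have finB: "finite B" using fin BI finite_subset by blast
  interpret M2: sigma_finite_measure ?M2 by (rule lb.sigma_finite[OF finB])
  have dm: "distr (?M1 \<Otimes>\<^sub>M ?M2) (PiM I (\<lambda>_. lborel)) (merge (I - B) B) = PiM I (\<lambda>_. lborel)"
    using lb.distr_merge[of "I - B" B] fin finB IU by auto
  have mm: "merge (I - B) B \<in> measurable (?M1 \<Otimes>\<^sub>M ?M2) (PiM I (\<lambda>_. lborel))"
    using measurable_merge[of "I - B" B "\<lambda>_. lborel"] IU by simp
  have X: "merge (I - B) B -` E \<inter> space (?M1 \<Otimes>\<^sub>M ?M2) \<in> sets (?M1 \<Otimes>\<^sub>M ?M2)"
    using mm E by (rule measurable_sets)
  have "emeasure (PiM I (\<lambda>_. lborel)) E = emeasure (distr (?M1 \<Otimes>\<^sub>M ?M2) (PiM I (\<lambda>_. lborel)) (merge (I - B) B)) E"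
    by (simp add: dm)
  also have "\<dots> = emeasure (?M1 \<Otimes>\<^sub>M ?M2) (merge (I - B) B -` E \<inter> space (?M1 \<Otimes>\<^sub>M ?M2))"
    by (rule emeasure_distr[OF mm E])
  also have "\<dots> = (\<integral>\<^sup>+cA. emeasure ?M2 (Pair cA -` (merge (I - B) B -` E \<inter> space (?M1 \<Otimes>\<^sub>M ?M2))) \<partial>?M1)"
    by (rule M2.emeasure_pair_measure_alt[OF X])
  also have "\<dots> = (\<integral>\<^sup>+cA. 0 \<partial>?M1)"
  proof (rule nn_integral_cong)
    fix cA assume cA: "cA \<in> space ?M1"
    have "Pair cA -` (merge (I - B) B -` E \<inter> space (?M1 \<Otimes>\<^sub>M ?M2))
          = {cB \<in> space ?M2. merge (I - B) B (cA, cB) \<in> E}"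
      using cA by (auto simp: space_pair_measure)
    then show "emeasure ?M2 (Pair cA -` (merge (I - B) B -` E \<inter> space (?M1 \<Otimes>\<^sub>M ?M2))) = 0"
      using fib[OF cA] by simp
  qed
  finally show ?thesis by simp
qed

lemma negligible_lborel_null:
  fixes S :: "'a::euclidean_space set"
  assumes "S \<in> sets lborel" "negligible S"
  shows "emeasure lborel S = 0"
  using assms null_sets_completion_iff[of S lborel] negligible_iff_null_sets by auto


context pert
begin

definition GG :: "('k::finite \<Rightarrow> nat) \<Rightarrow> (('d \<Rightarrow> nat) \<Rightarrow> real) \<Rightarrow> real^'d \<Rightarrow> real^'d \<Rightarrow> real^'k" where
  "GG \<iota> c x v = (\<chi> \<kappa>. Wv c x v (\<iota> \<kappa>) $ i1)"

definition Eset :: "('k::finite \<Rightarrow> nat) \<Rightarrow> ('k \<Rightarrow> ('d \<Rightarrow> nat)) \<Rightarrow> (('d \<Rightarrow> nat) \<Rightarrow> real) set" where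
  "Eset \<iota> \<sigma> = {c \<in> space (PiM (mindex D) (\<lambda>_. lborel)). \<exists>x v. GG \<iota> c x v = 0 \<and> inj (dB c x v \<iota> \<sigma>)}"

lemma cont_GG:
  fixes \<iota> :: "'k::finite \<Rightarrow> nat"
  assumes C: "continuous_on S C" and X: "continuous_on S X" and V: "continuous_on S V"
  shows "continuous_on S (\<lambda>p. GG \<iota> (C p) (X p) (V p))"
proof -
  have "continuous_on S (\<lambda>p. Wv (C p) (X p) (V p) (\<iota> \<kappa>))" for \<kappa>
    using all_cont[OF C X V continuous_on_const continuous_on_const continuous_on_const] by blast
  then show ?thesis unfolding GG_def
    by (intro continuous_on_vec_lambda) (rule continuous_on_component)
qed

lemma cont_dW_comp:
  fixes \<iota> :: "'k::finite \<Rightarrow> nat"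
  assumes C: "continuous_on S C" and X: "continuous_on S X" and V: "continuous_on S V"
    and G: "continuous_on S G" and Xi: "continuous_on S Xi" and N: "continuous_on S N"
  shows "continuous_on S (\<lambda>p. (\<chi> \<kappa>. dW (C p) (X p) (V p) (G p) (Xi p) (N p) (\<iota> \<kappa>) $ i1) :: real^'k)"
proof -
  have "continuous_on S (\<lambda>p. dW (C p) (X p) (V p) (G p) (Xi p) (N p) (\<iota> \<kappa>))" for \<kappa>
    using all_cont[OF C X V G Xi N] by blast
  then show ?thesis
    by (intro continuous_on_vec_lambda) (rule continuous_on_component)
qed

lemma cont_dB:
  fixes \<iota> :: "'k::finite \<Rightarrow> nat" and \<sigma> :: "'k \<Rightarrow> ('d \<Rightarrow> nat)"
  shows "continuous_on UNIV (\<lambda>p::(('d \<Rightarrow> nat) \<Rightarrow> real) \<times> ((real^'d) \<times> (real^'d)).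
            dB (fst p) (fst (snd p)) (snd (snd p)) \<iota> \<sigma> u)"
  unfolding dB_def Lv_def
  by (rule cont_dW_comp) (intro continuous_intros)+

lemma id_meas_fun: "(\<lambda>c::('d \<Rightarrow> nat) \<Rightarrow> real. c) \<in> measurable (PiM (mindex D) (\<lambda>_. lborel::real measure)) borel"
proof (rule measurable_coordinatewise_then_product)
  fix \<alpha> :: "'d \<Rightarrow> nat"
  show "(\<lambda>c. c \<alpha>) \<in> borel_measurable (PiM (mindex D) (\<lambda>_. lborel::real measure))"
  proof (cases "\<alpha> \<in> mindex D")
    case True
    then show ?thesis using measurable_component_singleton[OF True, of "\<lambda>_. lborel"] by simp
  next
    case False
    have "(\<lambda>c. c \<alpha>) \<in> borel_measurable (PiM (mindex D) (\<lambda>_. lborel) :: (('d \<Rightarrow> nat) \<Rightarrow> real) measure)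
      \<longleftrightarrow> (\<lambda>c. undefined::real) \<in> borel_measurable (PiM (mindex D) (\<lambda>_. lborel) :: (('d \<Rightarrow> nat) \<Rightarrow> real) measure)"
      by (rule measurable_cong) (use False in \<open>auto simp: space_PiM PiE_def extensional_def\<close>)
    then show ?thesis by simp
  qed
qed

lemma compact_box_fun:
  "compact {f :: ('d \<Rightarrow> nat) \<Rightarrow> real. \<forall>\<alpha>. (\<alpha> \<in> mindex D \<longrightarrow> f \<alpha> \<in> {-n..n}) \<and> (\<alpha> \<notin> mindex D \<longrightarrow> f \<alpha> = undefined)}"
proof -
  define X where "X \<alpha> = (if \<alpha> \<in> mindex D then {-n..n} else {undefined::real})" for \<alpha> :: "'d \<Rightarrow> nat"
  have eq: "{f :: ('d \<Rightarrow> nat) \<Rightarrow> real. \<forall>\<alpha>. (\<alpha> \<in> mindex D \<longrightarrow> f \<alpha> \<in> {-n..n}) \<and> (\<alpha> \<notin> mindex D \<longrightarrow> f \<alpha> = undefined)}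
        = PiE UNIV X"
    by (auto simp: X_def PiE_def Pi_def)
  have "compactin (product_topology (\<lambda>_. euclidean) UNIV) (PiE UNIV X)"
    by (subst compactin_PiE) (auto simp: X_def)
  then show ?thesis unfolding eq by (simp add: euclidean_product_topology compactin_euclidean_iff)
qed

lemma Eset_meas:
  fixes \<iota> :: "'k::finite \<Rightarrow> nat" and \<sigma> :: "'k \<Rightarrow> ('d \<Rightarrow> nat)"
  shows "Eset \<iota> \<sigma> \<in> sets (PiM (mindex D) (\<lambda>_. lborel))"
proof -
  let ?I = "mindex D :: ('d \<Rightarrow> nat) set"
  define K where "K n = {p :: (('d \<Rightarrow> nat) \<Rightarrow> real) \<times> ((real^'d) \<times> (real^'d)).
      (\<forall>\<alpha>. (\<alpha> \<in> ?I \<longrightarrow> fst p \<alpha> \<in> {-real n..real n}) \<and> (\<alpha> \<notin> ?I \<longrightarrow> fst p \<alpha> = undefined))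
      \<and> fst (snd p) \<in> cball 0 (real n) \<and> snd (snd p) \<in> cball 0 (real n)
      \<and> GG \<iota> (fst p) (fst (snd p)) (snd (snd p)) = 0
      \<and> (\<forall>u. norm u \<le> real (Suc n) * norm (dB (fst p) (fst (snd p)) (snd (snd p)) \<iota> \<sigma> u))}" for n
  have cK: "compact (K n)" for n
  proof -
    have "K n = ({f. \<forall>\<alpha>. (\<alpha> \<in> ?I \<longrightarrow> f \<alpha> \<in> {-real n..real n}) \<and> (\<alpha> \<notin> ?I \<longrightarrow> f \<alpha> = undefined)} \<times>
                 (cball 0 (real n) \<times> cball 0 (real n)))
          \<inter> ({p. GG \<iota> (fst p) (fst (snd p)) (snd (snd p)) = 0} \<inter>
             (\<Inter>u. {p. norm u \<le> real (Suc n) * norm (dB (fst p) (fst (snd p)) (snd (snd p)) \<iota> \<sigma> u)}))"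
      by (auto simp: K_def)
    moreover have "compact ({f. \<forall>\<alpha>. (\<alpha> \<in> ?I \<longrightarrow> f \<alpha> \<in> {-real n..real n}) \<and> (\<alpha> \<notin> ?I \<longrightarrow> f \<alpha> = undefined)} \<times>
                 (cball (0::real^'d) (real n) \<times> cball (0::real^'d) (real n)))"
      using compact_box_fun[of "real n"] by (intro compact_Times compact_cball) auto
    moreover have "closed ({p :: (('d \<Rightarrow> nat) \<Rightarrow> real) \<times> ((real^'d) \<times> (real^'d)). GG \<iota> (fst p) (fst (snd p)) (snd (snd p)) = 0} \<inter>
             (\<Inter>u. {p. norm u \<le> real (Suc n) * norm (dB (fst p) (fst (snd p)) (snd (snd p)) \<iota> \<sigma> u)}))"
    proof -
      have c1: "closed {p :: (('d \<Rightarrow> nat) \<Rightarrow> real) \<times> ((real^'d) \<times> (real^'d)). GG \<iota> (fst p) (fst (snd p)) (snd (snd p)) = 0}"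
        by (rule closed_Collect_eq[OF cont_GG continuous_on_const]) (intro continuous_intros)+
      have c2: "closed {p :: (('d \<Rightarrow> nat) \<Rightarrow> real) \<times> ((real^'d) \<times> (real^'d)). norm u \<le> real (Suc n) * norm (dB (fst p) (fst (snd p)) (snd (snd p)) \<iota> \<sigma> u)}"
        for u :: "real^'k"
        by (rule closed_Collect_le[OF continuous_on_const]) (intro continuous_intros cont_dB)
      show ?thesis by (intro closed_Int c1 closed_INT ballI c2)
    qed
    ultimately show ?thesis by (simp add: compact_Int_closed)
  qed
  define Cl where "Cl = (\<Union>n. fst ` K n)"
  have "Cl \<in> sets borel"
    unfolding Cl_def
  proof (rule sets.countable_UN, safe)
    fix n
    have "compact (fst ` K n)" by (intro compact_continuous_image cK continuous_on_fst continuous_on_id)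
    then show "fst ` K n \<in> sets borel" by (intro borel_closed compact_imp_closed)
  qed
  then have m: "(\<lambda>c. c) -` Cl \<inter> space (PiM ?I (\<lambda>_. lborel)) \<in> sets (PiM ?I (\<lambda>_. lborel))"
    using id_meas_fun measurable_sets by blast
  have "Eset \<iota> \<sigma> = (\<lambda>c. c) -` Cl \<inter> space (PiM ?I (\<lambda>_. lborel))"
  proof (intro set_eqI iffI)
    fix c assume "c \<in> Eset \<iota> \<sigma>"
    then obtain x v where c: "c \<in> space (PiM ?I (\<lambda>_. lborel))" "GG \<iota> c x v = 0" "inj (dB c x v \<iota> \<sigma>)"
      by (auto simp: Eset_def)
    obtain B where B: "B > 0" "\<And>u. B * norm u \<le> norm (dB c x v \<iota> \<sigma> u)"
      using linear_inj_bounded_below_pos[OF dB_linear c(3)] by blast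
    obtain n :: nat where n: "(\<Sum>\<alpha>\<in>?I. \<bar>c \<alpha>\<bar>) + norm x + norm v + 1 / B \<le> real n"
      using real_arch_simple by blast
    have ext: "\<alpha> \<notin> ?I \<Longrightarrow> c \<alpha> = undefined" for \<alpha> using c(1) by (auto simp: space_PiM PiE_def extensional_def)
    have ca: "\<bar>c \<alpha>\<bar> \<le> real n" if "\<alpha> \<in> ?I" for \<alpha>
    proof -
      have "\<bar>c \<alpha>\<bar> \<le> (\<Sum>\<alpha>\<in>?I. \<bar>c \<alpha>\<bar>)" using that finite_mindex by (intro member_le_sum) auto
      then show ?thesis using n B by (smt (verit) divide_pos_pos norm_ge_zero)
    qed
    have nu: "norm u \<le> real (Suc n) * norm (dB c x v \<iota> \<sigma> u)" for u
    proof -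
      have "1 / B \<le> real (Suc n)" using n by (smt (verit) norm_ge_zero of_nat_Suc sum_nonneg abs_ge_zero)
      moreover have "norm u \<le> (1 / B) * norm (dB c x v \<iota> \<sigma> u)" using B by (simp add: field_simps)
      ultimately show ?thesis by (smt (verit) mult_right_mono norm_ge_zero)
    qed
    have "(c, (x, v)) \<in> K n"
      unfolding K_def using ca ext c(2) nu n B
      by (auto simp: abs_le_iff) (smt (verit) divide_pos_pos norm_ge_zero sum_nonneg abs_ge_zero)+
    then show "c \<in> (\<lambda>c. c) -` Cl \<inter> space (PiM ?I (\<lambda>_. lborel))"
      using c(1) by (auto simp: Cl_def image_iff intro!: exI[of _ n] bexI[of _ "(c, (x, v))"])
  next
    fix c assume "c \<in> (\<lambda>c. c) -` Cl \<inter> space (PiM ?I (\<lambda>_. lborel))"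
    then obtain n x v where c: "c \<in> space (PiM ?I (\<lambda>_. lborel))" "(c, (x, v)) \<in> K n"
      by (auto simp: Cl_def)
    then have g: "GG \<iota> c x v = 0" and nu: "\<And>u. norm u \<le> real (Suc n) * norm (dB c x v \<iota> \<sigma> u)"
      by (auto simp: K_def)
    have "inj (dB c x v \<iota> \<sigma>)"
      unfolding linear_injective_0[OF dB_linear]
      using nu by (metis mult_zero_right norm_eq_zero norm_le_zero_iff)
    then show "c \<in> Eset \<iota> \<sigma>" using c(1) g by (auto simp: Eset_def)
  qed
  then show ?thesis using m by simp
qed

lemma Cm_line:
  fixes \<sigma> :: "'k::finite \<Rightarrow> ('d \<Rightarrow> nat)"
  shows "merge (mindex D - range \<sigma>) (range \<sigma>) (cA, Tm \<sigma> (b + s *\<^sub>R hb))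
       = (\<lambda>\<alpha>. merge (mindex D - range \<sigma>) (range \<sigma>) (cA, Tm \<sigma> b) \<alpha> + s * gam \<sigma> hb \<alpha>)"
  by (rule ext) (auto simp: merge_def Tm_def gam_def algebra_simps)

lemma Cm_cont:
  fixes \<sigma> :: "'k::finite \<Rightarrow> ('d \<Rightarrow> nat)"
  shows "continuous_on UNIV (\<lambda>p :: (real^'k) \<times> ((real^'d) \<times> (real^'d)). merge (mindex D - range \<sigma>) (range \<sigma>) (cA, Tm \<sigma> (fst p)))"
proof (rule continuous_on_coordinatewise_then_product)
  fix \<alpha> :: "'d \<Rightarrow> nat"
  show "continuous_on UNIV (\<lambda>p :: (real^'k) \<times> ((real^'d) \<times> (real^'d)). merge (mindex D - range \<sigma>) (range \<sigma>) (cA, Tm \<sigma> (fst p)) \<alpha>)"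
    by (cases "\<alpha> \<in> mindex D - range \<sigma>"; cases "\<alpha> \<in> range \<sigma>")
       (simp_all add: merge_def Tm_def continuous_on_const continuous_on_component continuous_on_fst continuous_on_id)
qed

lemma fiber_null:
  fixes \<iota> :: "'k::finite \<Rightarrow> nat" and \<sigma> :: "'k \<Rightarrow> ('d \<Rightarrow> nat)"
  assumes inj: "inj \<sigma>" and rI: "range \<sigma> \<subseteq> mindex D" and card: "CARD('k) = 2 * CARD('d) + 1"
    and cA: "cA \<in> space (PiM (mindex D - range \<sigma>) (\<lambda>_. lborel))"
  shows "emeasure (PiM (range \<sigma>) (\<lambda>_. lborel))
           {cB \<in> space (PiM (range \<sigma>) (\<lambda>_. lborel)). merge (mindex D - range \<sigma>) (range \<sigma>) (cA, cB) \<in> Eset \<iota> \<sigma>} = 0"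
proof -
  let ?I = "mindex D :: ('d \<Rightarrow> nat) set"
  let ?A = "?I - range \<sigma>" and ?B = "range \<sigma>"
  define Cm where "Cm b = merge ?A ?B (cA, Tm \<sigma> b)" for b
  define Fs where "Fs p = GG \<iota> (Cm (fst p)) (fst (snd p)) (snd (snd p))" for p :: "(real^'k) \<times> ((real^'d) \<times> (real^'d))"
  define DFs where "DFs p h = (\<chi> \<kappa>. dW (Cm (fst p)) (fst (snd p)) (snd (snd p)) (gam \<sigma> (fst h)) (fst (snd h)) (snd (snd h)) (\<iota> \<kappa>) $ i1)"
    for p h :: "(real^'k) \<times> ((real^'d) \<times> (real^'d))"
  define N0 where "N0 = {b. \<exists>y. Fs (b,y) = 0 \<and> inj (\<lambda>u. DFs (b,y) (u,0))}"
  have negN0: "negligible N0"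
    unfolding N0_def
  proof (rule sard_lite)
    show "DIM((real^'d) \<times> (real^'d)) < DIM(real^'k)" using card by simp
  next
    fix p h :: "(real^'k) \<times> ((real^'d) \<times> (real^'d))"
    obtain b x v where p: "p = (b, (x, v))" by (cases p) auto
    obtain hb hx hv where h: "h = (hb, (hx, hv))" by (cases h) auto
    have eq: "(\<lambda>s. Fs (p + s *\<^sub>R h)) = (\<lambda>s. \<chi> \<kappa>. Wv (\<lambda>\<alpha>. Cm b \<alpha> + s * gam \<sigma> hb \<alpha>) (x + s *\<^sub>R hx) (v + s *\<^sub>R hv) (\<iota> \<kappa>) $ i1)"
      by (rule ext) (simp add: Fs_def GG_def p h Cm_def Cm_line)
    have "((\<lambda>s. \<chi> \<kappa>. Wv (\<lambda>\<alpha>. Cm b \<alpha> + s * gam \<sigma> hb \<alpha>) (x + s *\<^sub>R hx) (v + s *\<^sub>R hv) (\<iota> \<kappa>) $ i1)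
           has_vector_derivative DFs p h) (at 0)"
    proof (rule vd_vec)
      fix \<kappa>
      have "((\<lambda>s. Wv (\<lambda>\<alpha>. Cm b \<alpha> + s * gam \<sigma> hb \<alpha>) (x + s *\<^sub>R hx) (v + s *\<^sub>R hv) (\<iota> \<kappa>)) has_vector_derivative
             dW (\<lambda>\<alpha>. Cm b \<alpha> + 0 * gam \<sigma> hb \<alpha>) (x + 0 *\<^sub>R hx) (v + 0 *\<^sub>R hv) (gam \<sigma> hb) hx hv (\<iota> \<kappa>)) (at 0)"
        using line[of "Cm b" "gam \<sigma> hb" x hx "\<iota> \<kappa>" 0 v hv] by blast
      from vd_nth[OF this, of i1]
      show "((\<lambda>s. (\<chi> \<kappa>. Wv (\<lambda>\<alpha>. Cm b \<alpha> + s * gam \<sigma> hb \<alpha>) (x + s *\<^sub>R hx) (v + s *\<^sub>R hv) (\<iota> \<kappa>) $ i1) $ \<kappa>)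
           has_vector_derivative DFs p h $ \<kappa>) (at 0)"
        by (simp add: DFs_def p h)
    qed
    then show "((\<lambda>s. Fs (p + s *\<^sub>R h)) has_vector_derivative DFs p h) (at 0)" by (simp only: eq)
  next
    fix p :: "(real^'k) \<times> ((real^'d) \<times> (real^'d))"
    show "linear (DFs p)"
    proof (rule linearI)
      fix h1 h2 :: "(real^'k) \<times> ((real^'d) \<times> (real^'d))"
      show "DFs p (h1 + h2) = DFs p h1 + DFs p h2"
        using dW_lin[of "Cm (fst p)" "fst (snd p)" "snd (snd p)" 1 "gam \<sigma> (fst h1)" 1 "gam \<sigma> (fst h2)"
                 "fst (snd h1)" "fst (snd h2)" "snd (snd h1)" "snd (snd h2)"]
              gam_lin[of \<sigma> 1 "fst h1" 1 "fst h2"]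
        by (simp add: DFs_def vec_eq_iff)
    next
      fix r and h :: "(real^'k) \<times> ((real^'d) \<times> (real^'d))"
      show "DFs p (r *\<^sub>R h) = r *\<^sub>R DFs p h"
        using dW_lin[of "Cm (fst p)" "fst (snd p)" "snd (snd p)" r "gam \<sigma> (fst h)" 0 "gam \<sigma> (fst h)"
                 "fst (snd h)" "fst (snd h)" "snd (snd h)" "snd (snd h)"]
              gam_lin[of \<sigma> r "fst h" 0 "fst h"]
        by (simp add: DFs_def vec_eq_iff)
    qed
  next
    fix h :: "(real^'k) \<times> ((real^'d) \<times> (real^'d))"
    show "continuous_on UNIV (\<lambda>p. DFs p h)"
      unfolding DFs_def
      by (rule cont_dW_comp) (simp_all add: Cm_def[abs_def] Cm_cont continuous_on_const continuous_intros)
  qed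
  define F where "F = {cB \<in> space (PiM ?B (\<lambda>_. lborel)). merge ?A ?B (cA, cB) \<in> Eset \<iota> \<sigma>}"
  have AB: "?A \<union> ?B = ?I" using rI by auto
  have mF: "F \<in> sets (PiM ?B (\<lambda>_. lborel))"
  proof -
    have "(\<lambda>cB. merge ?A ?B (cA, cB)) \<in> measurable (PiM ?B (\<lambda>_. lborel)) (PiM (?A \<union> ?B) (\<lambda>_. lborel::real measure))"
      by (rule measurable_compose[OF measurable_Pair1'[OF cA] measurable_merge])
    then have "(\<lambda>cB. merge ?A ?B (cA, cB)) \<in> measurable (PiM ?B (\<lambda>_. lborel)) (PiM ?I (\<lambda>_. lborel::real measure))"
      by (simp only: AB)
    from measurable_sets[OF this Eset_meas] show ?thesis by (simp add: F_def vimage_def Int_def conj_commute)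
  qed
  have sub: "Tm \<sigma> -` F \<subseteq> N0"
  proof
    fix b assume "b \<in> Tm \<sigma> -` F"
    then have "Cm b \<in> Eset \<iota> \<sigma>" by (simp add: F_def Cm_def)
    then obtain x v where "GG \<iota> (Cm b) x v = 0" "inj (dB (Cm b) x v \<iota> \<sigma>)" by (auto simp: Eset_def)
    moreover have "dB (Cm b) x v \<iota> \<sigma> = (\<lambda>u. DFs (b, (x, v)) (u, 0))"
      by (rule ext) (simp add: dB_def Lv_def DFs_def zero_prod_def)
    ultimately show "b \<in> N0" by (auto simp: N0_def Fs_def)
  qed
  have mT: "Tm \<sigma> -` F \<inter> space lborel \<in> sets lborel"
    using measurable_sets[OF Tm_measurable mF] .
  have "emeasure (PiM ?B (\<lambda>_. lborel)) F = emeasure (distr lborel (PiM ?B (\<lambda>_. lborel)) (Tm \<sigma>)) F"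
    by (simp add: distr_Tm[OF inj])
  also have "\<dots> = emeasure lborel (Tm \<sigma> -` F \<inter> space lborel)"
    by (rule emeasure_distr[OF Tm_measurable mF])
  also have "\<dots> = 0"
    by (rule negligible_lborel_null[OF mT]) (use negN0 sub negligible_subset in auto)
  finally show ?thesis by (simp add: F_def)
qed

end


lemma perturb_zero: "perturb i1 D \<phi> (\<lambda>_. 0) = \<phi>"
  by (rule ext) (simp add: perturb_def)

lemma pnorm_zero: "pnorm D (\<lambda>_. 0) = 0"
  by (simp add: pnorm_def)

theorem theorem21:
  fixes \<phi> :: "real^'d \<Rightarrow> real^'d" and i1 :: 'd and D m :: nat
    and r R a0 :: real and \<xi> :: "nat \<Rightarrow> (('d \<Rightarrow> nat) \<Rightarrow> real) \<Rightarrow> real^'d"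
  assumes D_ge: "D \<ge> 4 * CARD('d)"
    and diffeo: "diffeomorphism \<phi>"
    and r_pos: "r > 0" and rR: "r \<le> R"
    and Kplus: "\<And>x j. x \<in> cball 0 r \<Longrightarrow> j \<le> D - 1 \<Longrightarrow> (\<phi> ^^ j) x \<in> cball 0 R"
    and a0_pos: "a0 > 0"
    and Kplus_c: "\<And>c x j. pnorm D c \<le> a0 \<Longrightarrow> x \<in> cball 0 r \<Longrightarrow> j \<le> D - 1 \<Longrightarrow>
                   (perturb i1 D \<phi> c ^^ j) x \<in> cball 0 R"
    and C3: "\<And>c. pnorm D c \<le> a0 \<Longrightarrow> Ck_diffeomorphism 3 (perturb i1 D \<phi> c)"
    and fixpts: "\<And>c. pnorm D c \<le> a0 \<Longrightarrow>
                   {x. perturb i1 D \<phi> c x = x} = (\<lambda>i. \<xi> i c) ` {..<m} \<and> inj_on (\<lambda>i. \<xi> i c) {..<m}"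
    and no_per: "\<And>c x k. pnorm D c \<le> a0 \<Longrightarrow> 1 \<le> k \<Longrightarrow> k < 2 * D \<Longrightarrow>
                   (perturb i1 D \<phi> c ^^ k) x = x \<Longrightarrow> perturb i1 D \<phi> c x = x"
    and hyp: "\<And>c i. pnorm D c \<le> a0 \<Longrightarrow> i < m \<Longrightarrow> hyperbolic_fixed_point (perturb i1 D \<phi> c) (\<xi> i c)"
    and sep: "\<And>c i j. pnorm D c \<le> a0 \<Longrightarrow> i < m \<Longrightarrow> j < m \<Longrightarrow> i \<noteq> j \<Longrightarrow> \<xi> i c $ i1 \<noteq> \<xi> j c $ i1"
    and imm_fix: "\<And>c i. pnorm D c \<le> a0 \<Longrightarrow> i < m \<Longrightarrow> delay_immersive_at i1 D (perturb i1 D \<phi> c) (\<xi> i c)"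
  shows "AE c in param_measure D. pnorm D c < a0 \<longrightarrow>
           (\<forall>x\<in>cball 0 r. delay_immersive_at i1 D (perturb i1 D \<phi> c) x)"
proof -
  have "Ck 3 \<phi>" using C3[of "\<lambda>_. 0"] a0_pos by (simp add: pnorm_zero perturb_zero Ck_diffeomorphism_def)
  interpret pert \<phi> i1 D by standard fact
  let ?I = "mindex D :: ('d \<Rightarrow> nat) set"
  let ?M = "PiM ?I (\<lambda>_. lborel::real measure)"
  let ?K = "CARD(('d + 'd) option)"
  have cardK: "?K = 2 * CARD('d) + 1" by simp
  have d0: "0 < CARD('d)" by simp
  have KD: "?K < D" using D_ge cardK d0 by linarith
  obtain \<iota> :: "('d + 'd) option \<Rightarrow> nat" where \<iota>: "bij_betw \<iota> UNIV {1..?K}"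
    using finite_same_card_bij[of "UNIV :: ('d + 'd) option set" "{1..?K}"] by auto
  have \<iota>_lt: "\<iota> \<kappa> < D" for \<kappa>
  proof -
    have "\<iota> \<kappa> \<in> {1..?K}" using \<iota> by (auto simp: bij_betw_def)
    then show ?thesis using KD by simp
  qed
  define \<Sigma> where "\<Sigma> = {\<sigma> :: ('d + 'd) option \<Rightarrow> ('d \<Rightarrow> nat). inj \<sigma> \<and> range \<sigma> \<subseteq> ?I}"
  have fin\<Sigma>: "finite \<Sigma>"
  proof -
    have "\<Sigma> \<subseteq> PiE UNIV (\<lambda>_. ?I)" by (auto simp: \<Sigma>_def PiE_def Pi_def)
    moreover have "finite (PiE (UNIV :: ('d + 'd) option set) (\<lambda>_. ?I))"
      by (intro finite_PiE finite_mindex) simp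
    ultimately show ?thesis using finite_subset by blast
  qed
  have null: "Eset \<iota> \<sigma> \<in> null_sets ?M" if "\<sigma> \<in> \<Sigma>" for \<sigma>
  proof -
    have inj: "inj \<sigma>" and rI: "range \<sigma> \<subseteq> ?I" using that by (auto simp: \<Sigma>_def)
    have "emeasure ?M (Eset \<iota> \<sigma>) = 0"
      by (rule null_by_fibers[OF finite_mindex rI Eset_meas]) (rule fiber_null[OF inj rI cardK])
    then show ?thesis using Eset_meas by (simp add: null_sets_def)
  qed
  have AE1: "AE c in ?M. \<forall>\<sigma>\<in>\<Sigma>. c \<notin> Eset \<iota> \<sigma>"
    by (rule AE_finite_allI[OF fin\<Sigma>]) (rule AE_not_in[OF null])
  have main: "\<forall>x\<in>cball 0 r. delay_immersive_at i1 D (perturb i1 D \<phi> c) x"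
    if c: "c \<in> space ?M" and notE: "\<forall>\<sigma>\<in>\<Sigma>. c \<notin> Eset \<iota> \<sigma>" and pn: "pnorm D c < a0" for c
  proof (rule ccontr)
    assume "\<not> ?thesis"
    then obtain x where x: "x \<in> cball 0 r" "\<not> delay_immersive_at i1 D (perturb i1 D \<phi> c) x" by blast
    then obtain v where v: "v \<noteq> 0" "\<And>j. j < D \<Longrightarrow> Wv c x v j $ i1 = 0"
      unfolding delay_immersive_iff by blast
    have pc: "pnorm D c \<le> a0" using pn by simp
    let ?f = "perturb i1 D \<phi> c"
    have dif: "Ck_diffeomorphism 3 ?f" using C3[OF pc] .
    have injf: "inj ?f" using dif by (simp add: Ck_diffeomorphism_def bij_is_inj)
    have nfix: "?f x \<noteq> x"
    proof
      assume "?f x = x"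
      then have "x \<in> (\<lambda>i. \<xi> i c) ` {..<m}" using fixpts[OF pc] by blast
      then obtain i where "i < m" "x = \<xi> i c" by auto
      then show False using imm_fix[OF pc] x(2) by blast
    qed
    have dist: "Orb c x m1 \<noteq> Orb c x m2" if "m1 < ?K" "m2 < ?K" "m1 \<noteq> m2" for m1 m2
    proof
      assume eq: "Orb c x m1 = Orb c x m2"
      have gen: "False" if lt: "a < b" "b < ?K" and e: "Orb c x a = Orb c x b" for a b
      proof -
        define y where "y = (?f ^^ a) x"
        have "(?f ^^ (b - a)) y = (?f ^^ (b - a + a)) x"
          by (simp add: y_def funpow_add)
        also have "b - a + a = b" using lt by simp
        finally have "(?f ^^ (b - a)) y = (?f ^^ b) x" .
        then have "(?f ^^ (b - a)) y = y" using e by (simp add: Orb_def y_def)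
        then have fy: "?f y = y" using no_per[OF pc, of "b - a" y] lt KD by simp
        have "(?f ^^ a) (?f x) = ?f ((?f ^^ a) x)" by (simp add: funpow_swap1)
        also have "\<dots> = (?f ^^ a) x" using fy by (simp add: y_def)
        finally have "?f x = x" using inj_fn[OF injf, of a] by (simp add: inj_def)
        then show False using nfix by simp
      qed
      show False
      proof (cases "m1 < m2")
        case True show ?thesis by (rule gen[OF True that(2) eq])
      next
        case False then have "m2 < m1" using that(3) by simp
        then show ?thesis using gen[OF _ that(1)] eq by metis
      qed
    qed
    have "\<exists>\<sigma>::('d + 'd) option \<Rightarrow> ('d \<Rightarrow> nat). inj \<sigma> \<and> range \<sigma> \<subseteq> mindex D \<and> inj (dB c x v \<iota> \<sigma>)"
      by (rule exists_sigma[OF \<iota> dif v(1) dist]) (use KD in simp_all)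
    then obtain \<sigma> :: "('d + 'd) option \<Rightarrow> ('d \<Rightarrow> nat)" where s: "inj \<sigma>" "range \<sigma> \<subseteq> ?I" "inj (dB c x v \<iota> \<sigma>)"
      by blast
    have "GG \<iota> c x v = 0" using v(2) \<iota>_lt by (simp add: GG_def vec_eq_iff)
    then have "c \<in> Eset \<iota> \<sigma>" using c s(3) by (auto simp: Eset_def)
    moreover have "\<sigma> \<in> \<Sigma>" using s by (simp add: \<Sigma>_def)
    ultimately show False using notE by blast
  qed
  show ?thesis
    unfolding param_measure_def
    using AE1 AE_space[of ?M] by eventually_elim (use main in blast)
qed

end
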